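(* Let $G$ be a finite group, and let $f:G \to \{\pm 1\}$ be a class function (i.e. $f(x^{-1}yx) = f(y)$ for all $x,y \in G$) with $\mathbb{E}_{x \in G} f(x) = 0$. Then \[ \Pr_{x,y}\,[f(x)f(y) = f(xy)] \le \frac{1}{2}\left(1 + \frac{1}{d}\right), \] where $x,y$ are chosen uniformly and independently from $G$, and $d = \min_{\rho \ne 1} d_\rho$ is the minimum dimension of a nontrivial irreducible (complex) representation $\rho$ of $G$.
   Context: $d_\rho$ denotes the dimension of the representation $\rho$; the minimum is over nontrivial irreducible complex representations of $G$. $\mathbb{E}$ denotes the average over the uniform distribution on $G$. *)

theory Defs
  imports "HOL-Algebra.Group" "Jordan_Normal_Form.Matrix"
begin

definition is_rep :: "('a, 'b) monoid_scheme \<Rightarrow> nat \<Rightarrow> ('a \<Rightarrow> complex mat) \<Rightarrow> bool" where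
  "is_rep G n \<rho> \<longleftrightarrow>
     (\<forall>g\<in>carrier G. \<rho> g \<in> carrier_mat n n) \<and>
     \<rho> \<one>\<^bsub>G\<^esub> = 1\<^sub>m n \<and>
     (\<forall>g\<in>carrier G. \<forall>h\<in>carrier G. \<rho> (g \<otimes>\<^bsub>G\<^esub> h) = \<rho> g * \<rho> h)"

definition is_subspace :: "nat \<Rightarrow> complex vec set \<Rightarrow> bool" where
  "is_subspace n W \<longleftrightarrow> W \<subseteq> carrier_vec n \<and> 0\<^sub>v n \<in> W \<and>
     (\<forall>v\<in>W. \<forall>w\<in>W. v + w \<in> W) \<and> (\<forall>c. \<forall>v\<in>W. c \<cdot>\<^sub>v v \<in> W)"

definition is_invariant :: "('a, 'b) monoid_scheme \<Rightarrow> nat \<Rightarrow> ('a \<Rightarrow> complex mat) \<Rightarrow> complex vec set \<Rightarrow> bool" where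
  "is_invariant G n \<rho> W \<longleftrightarrow> is_subspace n W \<and> (\<forall>g\<in>carrier G. \<forall>v\<in>W. \<rho> g *\<^sub>v v \<in> W)"

definition is_irrep :: "('a, 'b) monoid_scheme \<Rightarrow> nat \<Rightarrow> ('a \<Rightarrow> complex mat) \<Rightarrow> bool" where
  "is_irrep G n \<rho> \<longleftrightarrow> is_rep G n \<rho> \<and> n > 0 \<and>
     (\<forall>W. is_invariant G n \<rho> W \<longrightarrow> W = {0\<^sub>v n} \<or> W = carrier_vec n)"

definition is_trivial_rep :: "('a, 'b) monoid_scheme \<Rightarrow> nat \<Rightarrow> ('a \<Rightarrow> complex mat) \<Rightarrow> bool" where
  "is_trivial_rep G n \<rho> \<longleftrightarrow> (\<forall>g\<in>carrier G. \<rho> g = 1\<^sub>m n)"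

definition min_nontriv_irrep_dim :: "('a, 'b) monoid_scheme \<Rightarrow> nat" where
  "min_nontriv_irrep_dim G =
     (LEAST n. \<exists>\<rho> :: 'a \<Rightarrow> complex mat. is_irrep G n \<rho> \<and> \<not> is_trivial_rep G n \<rho>)"

end

theory Submission imports Defs "Jordan_Normal_Form.Char_Poly" "HOL-Computational_Algebra.Fundamental_Theorem_Algebra"
begin

lemma complex_mat_has_eigenvector:
  fixes M :: "complex mat" assumes M: "M \<in> carrier_mat k k" and k: "k > 0"
  shows "\<exists>\<mu> c. c \<in> carrier_vec k \<and> c \<noteq> 0\<^sub>v k \<and> M *\<^sub>v c = \<mu> \<cdot>\<^sub>v c"
proof -
  have deg: "degree (char_poly M) = k" using degree_monic_char_poly[OF M] by simp
  then have "\<not> constant (poly (char_poly M))" using k by (simp add: constant_degree)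
  then obtain z where "poly (char_poly M) z = 0" using fundamental_theorem_of_algebra by blast
  then have "eigenvalue M z" using eigenvalue_root_char_poly[OF M] by simp
  then show ?thesis using M by (auto simp: eigenvalue_def eigenvector_def)
qed

lemma schur_scalar:
  assumes irr: "is_irrep G m \<rho>" and M: "M \<in> carrier_mat m m"
    and comm: "\<forall>g\<in>carrier G. \<rho> g * M = M * \<rho> g"
  shows "\<exists>c. M = c \<cdot>\<^sub>m 1\<^sub>m m"
proof -
  have m: "m > 0" and rep: "is_rep G m \<rho>" using irr by (auto simp: is_irrep_def)
  have rc: "\<And>g. g \<in> carrier G \<Longrightarrow> \<rho> g \<in> carrier_mat m m" using rep by (auto simp: is_rep_def)
  obtain \<mu> c where c: "c \<in> carrier_vec m" "c \<noteq> 0\<^sub>v m" "M *\<^sub>v c = \<mu> \<cdot>\<^sub>v c"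
    using complex_mat_has_eigenvector[OF M m] by blast
  define W where "W = {v \<in> carrier_vec m. M *\<^sub>v v = \<mu> \<cdot>\<^sub>v v}"
  have sub: "is_subspace m W"
    unfolding is_subspace_def W_def using M
    by (auto simp: mult_add_distrib_mat_vec mult_mat_vec smult_add_distrib_vec smult_smult_assoc mult.commute)
  have inv: "is_invariant G m \<rho> W"
    unfolding is_invariant_def
  proof (intro conjI sub ballI)
    fix g v assume g: "g \<in> carrier G" and v: "v \<in> W"
    have vc: "v \<in> carrier_vec m" using v W_def by auto
    have "M *\<^sub>v (\<rho> g *\<^sub>v v) = (M * \<rho> g) *\<^sub>v v" using M rc[OF g] vc by simp
    also have "\<dots> = (\<rho> g * M) *\<^sub>v v" using comm g by simp
    also have "\<dots> = \<rho> g *\<^sub>v (M *\<^sub>v v)" using M rc[OF g] vc by simp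
    also have "\<dots> = \<mu> \<cdot>\<^sub>v (\<rho> g *\<^sub>v v)" using v W_def rc[OF g] vc by (simp add: mult_mat_vec)
    finally show "\<rho> g *\<^sub>v v \<in> W" using rc[OF g] vc W_def by auto
  qed
  have "W \<noteq> {0\<^sub>v m}" using c W_def by auto
  then have full: "W = carrier_vec m" using irr inv by (auto simp: is_irrep_def)
  have "M = \<mu> \<cdot>\<^sub>m 1\<^sub>m m"
  proof (rule eq_matI)
    fix i j assume i: "i < dim_row (\<mu> \<cdot>\<^sub>m 1\<^sub>m m)" and j: "j < dim_col (\<mu> \<cdot>\<^sub>m 1\<^sub>m m)"
    have "unit_vec m j \<in> W" using full by auto
    then have "M *\<^sub>v unit_vec m j = \<mu> \<cdot>\<^sub>v unit_vec m j" using W_def by auto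
    then have "(M *\<^sub>v unit_vec m j) $ i = (\<mu> \<cdot>\<^sub>v unit_vec m j) $ i" by simp
    then show "M $$ (i, j) = (\<mu> \<cdot>\<^sub>m 1\<^sub>m m) $$ (i, j)" using i j M
      by (auto simp: scalar_prod_def unit_vec_def if_distrib[of "times _"] sum.delta' cong: if_cong)
  qed (use M in auto)
  then show ?thesis by blast
qed


definition lcomb :: "nat \<Rightarrow> (nat \<Rightarrow> complex) \<Rightarrow> (nat \<Rightarrow> 'a \<Rightarrow> complex) \<Rightarrow> 'a \<Rightarrow> complex" where
  "lcomb k c b = (\<lambda>x. \<Sum>i<k. c i * b i x)"

definition insp :: "nat \<Rightarrow> (nat \<Rightarrow> 'a \<Rightarrow> complex) \<Rightarrow> ('a \<Rightarrow> complex) \<Rightarrow> bool" where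
  "insp k b u \<longleftrightarrow> (\<exists>c. u = lcomb k c b)"

lemma lcomb_cong: "(\<And>i. i < k \<Longrightarrow> c i = d i) \<Longrightarrow> (\<And>i. i < k \<Longrightarrow> b i = e i) \<Longrightarrow> lcomb k c b = lcomb k d e"
  unfolding lcomb_def by (rule ext, rule sum.cong) auto

lemma insp_base: "i < k \<Longrightarrow> insp k b (b i)"
  unfolding insp_def lcomb_def
  by (rule exI[of _ "\<lambda>j. if j = i then 1 else 0"]) (auto simp: if_distrib[of "\<lambda>a. a * _"] sum.delta cong: if_cong)

lemma insp_lcomb:
  assumes "\<forall>j<k'. insp k b (v j)"
  shows "insp k b (lcomb k' d v)"
proof -
  from assms have "\<forall>j. \<exists>c. j < k' \<longrightarrow> v j = lcomb k c b" unfolding insp_def by blast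
  then obtain C where C: "\<And>j. j < k' \<Longrightarrow> v j = lcomb k (C j) b" by metis
  have "lcomb k' d v = lcomb k (\<lambda>i. \<Sum>j<k'. d j * C j i) b"
    unfolding lcomb_def
  proof (rule ext)
    fix x
    have "(\<Sum>j<k'. d j * v j x) = (\<Sum>j<k'. d j * (\<Sum>i<k. C j i * b i x))"
      using C by (intro sum.cong) (auto simp: lcomb_def)
    also have "\<dots> = (\<Sum>i<k. (\<Sum>j<k'. d j * C j i) * b i x)"
      by (simp add: sum_distrib_left sum_distrib_right sum.swap[of _ "{..<k}"] mult.assoc)
    finally show "(\<Sum>j<k'. d j * v j x) = (\<Sum>i<k. (\<Sum>j<k'. d j * C j i) * b i x)" .
  qed
  then show ?thesis unfolding insp_def by blast
qed

lemma insp_trans: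
  assumes "\<forall>j<k'. insp k b (v j)" "insp k' v u"
  shows "insp k b u"
  using assms insp_lcomb unfolding insp_def[of k' v u] by blast

locale cf = group G for G (structure) +
  fixes f :: "'a \<Rightarrow> int"
  assumes fin: "finite (carrier G)"
  and pm: "\<forall>x\<in>carrier G. f x = 1 \<or> f x = -1"
  and cls: "\<forall>x\<in>carrier G. \<forall>y\<in>carrier G. f (inv x \<otimes> y \<otimes> x) = f y"
  and mean0: "(\<Sum>x\<in>carrier G. f x) = 0"
begin

lemma sum_mult_right: "y \<in> carrier G \<Longrightarrow> (\<Sum>x\<in>carrier G. F (x \<otimes> y)) = (\<Sum>x\<in>carrier G. F x)"
  by (rule sum.reindex_bij_witness[of _ "\<lambda>z. z \<otimes> inv y" "\<lambda>x. x \<otimes> y"]) (auto simp: m_assoc)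

lemma sum_mult_left: "y \<in> carrier G \<Longrightarrow> (\<Sum>x\<in>carrier G. F (y \<otimes> x)) = (\<Sum>x\<in>carrier G. F x)"
  by (rule sum.reindex_bij_witness[of _ "\<lambda>z. inv y \<otimes> z" "\<lambda>x. y \<otimes> x"]) (auto simp: m_assoc[symmetric])

lemma sum_inv: "(\<Sum>x\<in>carrier G. F (inv x)) = (\<Sum>x\<in>carrier G. F x)"
  by (rule sum.reindex_bij_witness[of _ "\<lambda>z. inv z" "\<lambda>x. inv x"]) auto

definition sv :: "('a \<Rightarrow> complex) \<Rightarrow> bool" where
  "sv u \<longleftrightarrow> (\<forall>x. x \<notin> carrier G \<longrightarrow> u x = 0)"

definition vip :: "('a \<Rightarrow> complex) \<Rightarrow> ('a \<Rightarrow> complex) \<Rightarrow> complex" where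
  "vip u v = (\<Sum>x\<in>carrier G. cnj (u x) * v x)"

definition orth :: "nat \<Rightarrow> (nat \<Rightarrow> 'a \<Rightarrow> complex) \<Rightarrow> bool" where
  "orth k b \<longleftrightarrow> (\<forall>i<k. sv (b i)) \<and> (\<forall>i<k. \<forall>j<k. vip (b i) (b j) = (if i = j then 1 else 0))"

lemma vip_lcomb_right: "vip u (lcomb k c b) = (\<Sum>i<k. c i * vip u (b i))"
  unfolding vip_def lcomb_def
  by (simp add: sum_distrib_left sum_distrib_right sum.swap[of _ "carrier G"] mult.assoc mult.left_commute)

lemma vip_lcomb_left: "vip (lcomb k c b) v = (\<Sum>i<k. cnj (c i) * vip (b i) v)"
  unfolding vip_def lcomb_def
  by (simp add: sum_distrib_left sum_distrib_right sum.swap[of _ "carrier G"] mult.assoc mult.left_commute)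

lemma vip_cnj: "cnj (vip u v) = vip v u"
  unfolding vip_def by (simp add: mult.commute)

lemma cnj_mult_self: "cnj z * z = complex_of_real ((cmod z)^2)"
  using complex_norm_square[of z] by (simp add: mult.commute)

lemma vip_self: "vip u u = of_real (\<Sum>x\<in>carrier G. (cmod (u x))^2)"
  unfolding vip_def of_real_sum by (simp only: cnj_mult_self)

lemma vip_self_real: "vip u u = of_real (Re (vip u u))"
  by (simp add: vip_self)

lemma vip_self_nonneg: "Re (vip u u) \<ge> 0"
  by (simp add: vip_self sum_nonneg)

lemma vip_self_zero: assumes "sv u" "vip u u = 0" shows "u = (\<lambda>x. 0)"
proof (rule ext)
  fix x
  have "complex_of_real (\<Sum>x\<in>carrier G. (cmod (u x))^2) = 0" using assms(2) by (simp only: vip_self)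
  then have "(\<Sum>x\<in>carrier G. (cmod (u x))^2) = 0" by (simp only: of_real_eq_0_iff)
  then have "\<forall>x\<in>carrier G. (cmod (u x))^2 = 0" using fin by (subst (asm) sum_nonneg_eq_0_iff) auto
  then show "u x = 0" using assms(1) unfolding sv_def by (cases "x \<in> carrier G") auto
qed

lemma sv_lcomb: "(\<And>i. i < k \<Longrightarrow> sv (b i)) \<Longrightarrow> sv (lcomb k c b)"
  unfolding sv_def lcomb_def by simp

lemma orth_expand:
  assumes o: "orth k b" and u: "insp k b u"
  shows "u = lcomb k (\<lambda>i. vip (b i) u) b"
proof -
  obtain c where c: "u = lcomb k c b" using u insp_def by blast
  have "vip (b i) u = c i" if "i < k" for i
  proof -
    have "vip (b i) u = (\<Sum>j<k. c j * (if i = j then 1 else 0))"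
      unfolding c vip_lcomb_right using o that unfolding orth_def by (intro sum.cong) auto
    also have "\<dots> = c i" using that by (simp add: if_distrib[of "\<lambda>a. _ * a"] sum.delta cong: if_cong)
    finally show ?thesis .
  qed
  then show ?thesis unfolding c by (intro lcomb_cong) auto
qed

lemma parseval:
  assumes o: "orth k b" and u: "insp k b u"
  shows "Re (vip u u) = (\<Sum>i<k. (cmod (vip (b i) u))^2)"
proof -
  have "vip u u = vip (lcomb k (\<lambda>i. vip (b i) u) b) u" using orth_expand[OF o u] by simp
  also have "\<dots> = (\<Sum>i<k. cnj (vip (b i) u) * vip (b i) u)" by (simp add: vip_lcomb_left)
  also have "\<dots> = of_real (\<Sum>i<k. (cmod (vip (b i) u))^2)" unfolding of_real_sum by (simp only: cnj_mult_self)
  finally show ?thesis by simp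
qed


lemma vip_diff_left: "vip (\<lambda>x. u x - v x) w = vip u w - vip v w"
  unfolding vip_def by (simp add: sum_subtractf ring_distribs)

lemma vip_diff_right: "vip w (\<lambda>x. u x - v x) = vip w u - vip w v"
  unfolding vip_def by (simp add: sum_subtractf ring_distribs)

lemma vip_basis_lcomb:
  assumes o: "orth k b" and i: "i < k"
  shows "vip (b i) (lcomb k c b) = c i"
proof -
  have "vip (b i) (lcomb k c b) = (\<Sum>j<k. c j * (if i = j then 1 else 0))"
    unfolding vip_lcomb_right using o i unfolding orth_def by (intro sum.cong) auto
  also have "\<dots> = c i" using i by (simp add: if_distrib[of "\<lambda>a. _ * a"] sum.delta cong: if_cong)
  finally show ?thesis .
qed

lemma bessel_eq:
  fixes a :: "'a \<Rightarrow> complex"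
  assumes o: "orth k b"
  defines "p \<equiv> lcomb k (\<lambda>i. vip (b i) a) b"
  shows "Re (vip (\<lambda>x. a x - p x) (\<lambda>x. a x - p x)) = Re (vip a a) - (\<Sum>i<k. (cmod (vip (b i) a))^2)"
proof -
  define S where "S = (\<Sum>i<k. cnj (vip (b i) a) * vip (b i) a)"
  have S: "S = of_real (\<Sum>i<k. (cmod (vip (b i) a))^2)" unfolding S_def of_real_sum by (simp only: cnj_mult_self)
  have 1: "vip a p = S" unfolding p_def vip_lcomb_right S_def
    by (intro sum.cong refl) (metis vip_cnj mult.commute)
  have 2: "vip p a = S" unfolding p_def vip_lcomb_left S_def by simp
  have 3: "vip p p = S" unfolding p_def vip_lcomb_left S_def
    by (intro sum.cong refl) (simp add: vip_basis_lcomb[OF o])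
  have "vip (\<lambda>x. a x - p x) (\<lambda>x. a x - p x) = vip a a - S"
    by (simp add: vip_diff_left vip_diff_right 1 2 3)
  then show ?thesis by (simp add: S)
qed

lemma bessel:
  assumes o: "orth k b"
  shows "(\<Sum>i<k. (cmod (vip (b i) a))^2) \<le> Re (vip a a)"
  using bessel_eq[OF o, of a] vip_self_nonneg[of "\<lambda>x. a x - lcomb k (\<lambda>i. vip (b i) a) b x"] by linarith

lemma bessel_equality:
  assumes o: "orth k b" and a: "sv a" and eq: "(\<Sum>i<k. (cmod (vip (b i) a))^2) = Re (vip a a)"
  shows "insp k b a"
proof -
  define p where "p = lcomb k (\<lambda>i. vip (b i) a) b"
  define d where "d = (\<lambda>x. a x - p x)"
  have "Re (vip d d) = 0" using bessel_eq[OF o, of a] eq unfolding d_def p_def by simp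
  then have "vip d d = 0" by (metis vip_self_real of_real_0)
  moreover have "sv d" unfolding d_def p_def using a o sv_lcomb[of k b] unfolding sv_def orth_def
    by (auto simp: lcomb_def)
  ultimately have "d = (\<lambda>x. 0)" by (rule vip_self_zero[rotated])
  then have "a = p" unfolding d_def by (metis (no_types, lifting) ext eq_iff_diff_eq_0)
  then show ?thesis unfolding p_def insp_def by blast
qed

lemma orth_len:
  assumes ob: "orth k b" and oc: "orth k' c" and sub: "\<forall>i<k'. insp k b (c i)"
  shows "k' \<le> k" and "k' = k \<Longrightarrow> \<forall>j<k. insp k' c (b j)"
proof -
  have one_b: "Re (vip (b j) (b j)) = 1" if "j < k" for j using ob that unfolding orth_def by auto
  have one_c: "Re (vip (c i) (c i)) = 1" if "i < k'" for i using oc that unfolding orth_def by auto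
  define s where "s j = (\<Sum>i<k'. (cmod (vip (c i) (b j)))^2)" for j
  have s_le: "s j \<le> 1" if "j < k" for j unfolding s_def using bessel[OF oc, of "b j"] one_b[OF that] by simp
  have "real k' = (\<Sum>i<k'. Re (vip (c i) (c i)))" using one_c by simp
  also have "\<dots> = (\<Sum>i<k'. \<Sum>j<k. (cmod (vip (b j) (c i)))^2)"
    using parseval[OF ob] sub by (intro sum.cong) auto
  also have "\<dots> = (\<Sum>j<k. s j)" unfolding s_def
    by (subst sum.swap) (intro sum.cong refl, metis complex_mod_cnj vip_cnj)
  finally have ksum: "real k' = (\<Sum>j<k. s j)" .
  also have "\<dots> \<le> (\<Sum>j<k. 1)" using s_le by (intro sum_mono) auto
  finally show "k' \<le> k" by simp
  assume kk: "k' = k"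
  have "(\<Sum>j<k. 1 - s j) = 0" using ksum kk by (simp add: sum_subtractf)
  then have "\<forall>j\<in>{..<k}. 1 - s j = 0" using s_le by (subst (asm) sum_nonneg_eq_0_iff) auto
  then show "\<forall>j<k. insp k' c (b j)"
    using one_b ob unfolding orth_def s_def
    by (auto intro!: bessel_equality[OF oc])
qed


definition RT :: "'a \<Rightarrow> ('a \<Rightarrow> complex) \<Rightarrow> 'a \<Rightarrow> complex" where
  "RT g u = (\<lambda>x. if x \<in> carrier G then u (x \<otimes> g) else 0)"

definition AT :: "('a \<Rightarrow> complex) \<Rightarrow> 'a \<Rightarrow> complex" where
  "AT u = (\<lambda>y. if y \<in> carrier G then \<Sum>x\<in>carrier G. of_int (f x) * u (x \<otimes> y) else 0)"

definition ADT :: "('a \<Rightarrow> complex) \<Rightarrow> 'a \<Rightarrow> complex" where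
  "ADT u = (\<lambda>z. if z \<in> carrier G then \<Sum>y\<in>carrier G. of_int (f (z \<otimes> inv y)) * u y else 0)"

definition HT :: "('a \<Rightarrow> complex) \<Rightarrow> 'a \<Rightarrow> complex" where
  "HT u = ADT (AT u)"

definition onev :: "'a \<Rightarrow> complex" where
  "onev = (\<lambda>x. if x \<in> carrier G then 1 else 0)"

lemma sv_ops[simp]: "sv (RT g u)" "sv (AT u)" "sv (ADT u)" "sv (HT u)" "sv onev"
  unfolding sv_def RT_def AT_def ADT_def HT_def onev_def by auto

lemma RT_lcomb: "RT g (lcomb k c b) = lcomb k c (\<lambda>i. RT g (b i))"
  unfolding RT_def lcomb_def by (rule ext) auto

lemma AT_lcomb: "AT (lcomb k c b) = lcomb k c (\<lambda>i. AT (b i))"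
  unfolding AT_def lcomb_def
  by (rule ext) (auto simp: sum_distrib_left sum_distrib_right sum.swap[of _ "carrier G"] mult.left_commute)

lemma ADT_lcomb: "ADT (lcomb k c b) = lcomb k c (\<lambda>i. ADT (b i))"
  unfolding ADT_def lcomb_def
  by (rule ext) (auto simp: sum_distrib_left sum_distrib_right sum.swap[of _ "carrier G"] mult.left_commute)

lemma HT_lcomb: "HT (lcomb k c b) = lcomb k c (\<lambda>i. HT (b i))"
  unfolding HT_def by (simp add: AT_lcomb ADT_lcomb)

lemma AT_scale: "AT (\<lambda>x. a * u x) = (\<lambda>x. a * AT u x)"
  unfolding AT_def by (rule ext) (auto simp: sum_distrib_left mult.left_commute)

lemma ADT_scale: "ADT (\<lambda>x. a * u x) = (\<lambda>x. a * ADT u x)"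
  unfolding ADT_def by (rule ext) (auto simp: sum_distrib_left mult.left_commute)

lemma HT_scale: "HT (\<lambda>x. a * u x) = (\<lambda>x. a * HT u x)"
  unfolding HT_def by (simp add: AT_scale ADT_scale)

lemma vip_AT_ADT: "vip u (ADT w) = vip (AT u) w"
proof -
  have inner: "(\<Sum>x\<in>carrier G. of_int (f x) * cnj (u (x \<otimes> y))) =
      (\<Sum>z\<in>carrier G. of_int (f (z \<otimes> inv y)) * cnj (u z))" if y: "y \<in> carrier G" for y
  proof -
    have "(\<Sum>z\<in>carrier G. of_int (f (z \<otimes> inv y)) * cnj (u z)) =
        (\<Sum>x\<in>carrier G. of_int (f (x \<otimes> y \<otimes> inv y)) * cnj (u (x \<otimes> y)))"
      using sum_mult_right[OF y, of "\<lambda>z. of_int (f (z \<otimes> inv y)) * cnj (u z)"] by simp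
    also have "\<dots> = (\<Sum>x\<in>carrier G. of_int (f x) * cnj (u (x \<otimes> y)))"
      using y by (intro sum.cong refl) (simp add: m_assoc)
    finally show ?thesis by simp
  qed
  have "vip (AT u) w = (\<Sum>y\<in>carrier G. (\<Sum>x\<in>carrier G. of_int (f x) * cnj (u (x \<otimes> y))) * w y)"
    unfolding vip_def AT_def by (intro sum.cong refl) simp
  also have "\<dots> = (\<Sum>y\<in>carrier G. (\<Sum>z\<in>carrier G. of_int (f (z \<otimes> inv y)) * cnj (u z)) * w y)"
    using inner by simp
  also have "\<dots> = (\<Sum>y\<in>carrier G. \<Sum>z\<in>carrier G. cnj (u z) * (of_int (f (z \<otimes> inv y)) * w y))"
    by (simp add: sum_distrib_right sum_distrib_left mult.commute mult.left_commute)
  also have "\<dots> = (\<Sum>z\<in>carrier G. \<Sum>y\<in>carrier G. cnj (u z) * (of_int (f (z \<otimes> inv y)) * w y))"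
    by (rule sum.swap)
  also have "\<dots> = vip u (ADT w)"
    unfolding vip_def ADT_def by (simp add: sum_distrib_left)
  finally show ?thesis by simp
qed

lemma vip_HT_right: "vip u (HT v) = vip (AT u) (AT v)"
  unfolding HT_def by (rule vip_AT_ADT)

lemma vip_HT_left: "vip (HT u) v = vip (AT u) (AT v)"
  by (metis vip_HT_right vip_cnj)

lemma RT_RT: "g \<in> carrier G \<Longrightarrow> h \<in> carrier G \<Longrightarrow> RT g (RT h u) = RT (g \<otimes> h) u"
  unfolding RT_def by (rule ext) (auto simp: m_assoc)

lemma RT_one: "sv u \<Longrightarrow> RT \<one> u = u"
  unfolding RT_def sv_def by (rule ext) auto

lemma vip_RT: assumes g: "g \<in> carrier G" shows "vip (RT g u) v = vip u (RT (inv g) v)"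
proof -
  have "vip u (RT (inv g) v) = (\<Sum>x\<in>carrier G. cnj (u x) * v (x \<otimes> inv g))"
    unfolding vip_def RT_def by (intro sum.cong) auto
  also have "\<dots> = (\<Sum>x\<in>carrier G. cnj (u (x \<otimes> g)) * v (x \<otimes> g \<otimes> inv g))"
    using sum_mult_right[OF g, of "\<lambda>x. cnj (u x) * v (x \<otimes> inv g)"] by simp
  also have "\<dots> = vip (RT g u) v"
    unfolding vip_def RT_def using g by (intro sum.cong) (auto simp: m_assoc)
  finally show ?thesis by simp
qed

lemma AT_RT: assumes g: "g \<in> carrier G" shows "AT (RT g u) = RT g (AT u)"
  unfolding AT_def RT_def using g by (rule_tac ext) (auto simp: m_assoc intro!: sum.cong)

lemma aux_ginv: "z \<in> carrier G \<Longrightarrow> g \<in> carrier G \<Longrightarrow> x \<in> carrier G \<Longrightarrow>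
   z \<otimes> g \<otimes> inv (x \<otimes> g) = z \<otimes> inv x"
proof -
  assume a: "z \<in> carrier G" "g \<in> carrier G" "x \<in> carrier G"
  have "g \<otimes> (inv g \<otimes> inv x) = (g \<otimes> inv g) \<otimes> inv x" using a by (intro m_assoc[symmetric]) auto
  also have "\<dots> = inv x" using a by simp
  finally have "g \<otimes> (inv g \<otimes> inv x) = inv x" .
  then show ?thesis using a by (simp add: inv_mult_group m_assoc)
qed

lemma ADT_RT: assumes g: "g \<in> carrier G" shows "ADT (RT g u) = RT g (ADT u)"
proof (rule ext)
  fix z
  show "ADT (RT g u) z = RT g (ADT u) z"
  proof (cases "z \<in> carrier G")
    case True
    have "RT g (ADT u) z = (\<Sum>y\<in>carrier G. of_int (f (z \<otimes> g \<otimes> inv y)) * u y)"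
      unfolding RT_def ADT_def using True g by simp
    also have "\<dots> = (\<Sum>y\<in>carrier G. of_int (f (z \<otimes> g \<otimes> inv (y \<otimes> g))) * u (y \<otimes> g))"
      using sum_mult_right[OF g, of "\<lambda>y. of_int (f (z \<otimes> g \<otimes> inv y)) * u y"] by simp
    also have "\<dots> = ADT (RT g u) z"
      unfolding RT_def ADT_def using True g
      by (auto simp: aux_ginv intro!: sum.cong)
    finally show ?thesis by simp
  qed (simp add: ADT_def RT_def)
qed

lemma HT_RT: "g \<in> carrier G \<Longrightarrow> HT (RT g u) = RT g (HT u)"
  unfolding HT_def by (simp add: AT_RT ADT_RT)

lemma AT_onev: "AT onev = (\<lambda>x. 0)"
proof (rule ext)
  fix y
  show "AT onev y = 0"
  proof (cases "y \<in> carrier G")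
    case True
    then have "AT onev y = (\<Sum>x\<in>carrier G. complex_of_int (f x))"
      unfolding AT_def onev_def by (auto intro!: sum.cong)
    also have "\<dots> = of_int (\<Sum>x\<in>carrier G. f x)" by simp
    finally show ?thesis using mean0 by simp
  qed (simp add: AT_def)
qed

lemma HT_onev: "HT onev = (\<lambda>x. 0)"
  unfolding HT_def AT_onev ADT_def by auto


lemma insp_scale: assumes "insp k b u" shows "insp k b (\<lambda>x. a * u x)"
proof -
  obtain c where "u = lcomb k c b" using assms insp_def by blast
  then have "(\<lambda>x. a * u x) = lcomb k (\<lambda>i. a * c i) b" by (auto simp: lcomb_def sum_distrib_left mult.assoc)
  then show ?thesis unfolding insp_def by blast
qed

lemma insp_add: assumes "insp k b u" "insp k b v" shows "insp k b (\<lambda>x. u x + v x)"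
proof -
  obtain c d where "u = lcomb k c b" "v = lcomb k d b" using assms insp_def by blast
  then have "(\<lambda>x. u x + v x) = lcomb k (\<lambda>i. c i + d i) b" by (auto simp: lcomb_def sum.distrib ring_distribs)
  then show ?thesis unfolding insp_def by blast
qed

lemma insp_diff: assumes "insp k b u" "insp k b v" shows "insp k b (\<lambda>x. u x - v x)"
proof -
  obtain c d where "u = lcomb k c b" "v = lcomb k d b" using assms insp_def by blast
  then have "(\<lambda>x. u x - v x) = lcomb k (\<lambda>i. c i - d i) b" by (auto simp: lcomb_def sum_subtractf ring_distribs)
  then show ?thesis unfolding insp_def by blast
qed

abbreviation inspL :: "('a \<Rightarrow> complex) list \<Rightarrow> ('a \<Rightarrow> complex) \<Rightarrow> bool" where
  "inspL L u \<equiv> insp (length L) ((!) L) u"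

abbreviation orthL :: "('a \<Rightarrow> complex) list \<Rightarrow> bool" where
  "orthL L \<equiv> orth (length L) ((!) L)"

lemma inspL_base: "u \<in> set L \<Longrightarrow> inspL L u"
  by (metis in_set_conv_nth insp_base)

lemma inspL_trans: "(\<forall>x\<in>set X. inspL Y x) \<Longrightarrow> inspL X u \<Longrightarrow> inspL Y u"
  by (rule insp_trans[of "length X"]) auto

lemma inspL_lcomb: "(\<forall>x\<in>set X. inspL Y x) \<Longrightarrow> inspL Y (lcomb (length X) c ((!) X))"
  by (rule insp_lcomb) auto

end

fun (in cf) gs :: "('a \<Rightarrow> complex) list \<Rightarrow> ('a \<Rightarrow> complex) list \<Rightarrow> ('a \<Rightarrow> complex) list" where
  "gs acc [] = acc"
| "gs acc (v # vs) = (let w = (\<lambda>x. v x - lcomb (length acc) (\<lambda>i. vip (acc ! i) v) ((!) acc) x) in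
     if vip w w = 0 then gs acc vs
     else gs (acc @ [(\<lambda>x. complex_of_real (1 / sqrt (Re (vip w w))) * w x)]) vs)"

context cf begin

lemma gs_props:
  assumes "orthL acc" and "\<forall>v\<in>set vs. sv v"
  shows "orthL (gs acc vs) \<and> (\<exists>r. gs acc vs = acc @ r) \<and> (\<forall>l\<in>set (gs acc vs). inspL (acc @ vs) l)
     \<and> (\<forall>u\<in>set (acc @ vs). inspL (gs acc vs) u)"
  using assms
proof (induction vs arbitrary: acc)
  case Nil
  then show ?case by (auto intro: inspL_base)
next
  case (Cons v vs)
  define p where "p = lcomb (length acc) (\<lambda>i. vip (acc ! i) v) ((!) acc)"
  define w where "w = (\<lambda>x. v x - p x)"
  have oacc: "orthL acc" and svv: "sv v" and svs: "\<forall>v\<in>set vs. sv v" using Cons.prems by auto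
  have svacc: "\<forall>i<length acc. sv (acc ! i)" using oacc unfolding orth_def by auto
  have svp: "sv p" unfolding p_def by (rule sv_lcomb) (use svacc in auto)
  have svw: "sv w" using svv svp unfolding w_def sv_def by auto
  have mono: "\<forall>x\<in>set (acc @ vs). inspL (acc @ v # vs) x" by (intro ballI inspL_base) auto
  have p_span: "inspL X p" if "\<forall>x\<in>set acc. inspL X x" for X
    unfolding p_def by (rule inspL_lcomb) (use that in auto)
  show ?case
  proof (cases "vip w w = 0")
    case True
    then have w0: "w = (\<lambda>x. 0)" using vip_self_zero[OF svw] by simp
    then have vp: "v = p" unfolding w_def by (metis (no_types, lifting) ext eq_iff_diff_eq_0)
    have gseq: "gs acc (v # vs) = gs acc vs" using True unfolding w_def p_def by (simp add: Let_def)
    note IH = Cons.IH[OF oacc svs]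
    have "\<forall>l\<in>set (gs acc vs). inspL (acc @ v # vs) l" using IH mono inspL_trans by blast
    moreover have "inspL (gs acc vs) v" using vp p_span IH by auto
    ultimately show ?thesis using IH gseq by auto
  next
    case False
    define c where "c = complex_of_real (1 / sqrt (Re (vip w w)))"
    define w' where "w' = (\<lambda>x. c * w x)"
    define acc' where "acc' = acc @ [w']"
    have gseq: "gs acc (v # vs) = gs acc' vs" using False
      unfolding acc'_def w'_def c_def w_def p_def by (simp add: Let_def)
    have pos: "Re (vip w w) > 0" using False vip_self_nonneg[of w] vip_self_real[of w]
      by (metis less_eq_real_def of_real_0)
    have ww: "vip w' w' = 1"
    proof -
      have "vip w' w' = cnj c * c * vip w w" unfolding w'_def vip_def
        by (simp add: sum_distrib_left mult.commute mult.left_commute)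
      also have "\<dots> = complex_of_real ((1 / sqrt (Re (vip w w))) * (1 / sqrt (Re (vip w w))) * Re (vip w w))"
        unfolding c_def by (subst (3) vip_self_real) (simp only: of_real_mult complex_cnj_complex_of_real)
      also have "(1 / sqrt (Re (vip w w))) * (1 / sqrt (Re (vip w w))) * Re (vip w w) = 1"
        using pos by (simp add: real_sqrt_mult_self)
      finally show ?thesis by simp
    qed
    have aw: "vip (acc ! i) w' = 0" if i: "i < length acc" for i
    proof -
      have "vip (acc ! i) w = vip (acc ! i) v - vip (acc ! i) p" unfolding w_def by (rule vip_diff_right)
      also have "vip (acc ! i) p = vip (acc ! i) v" unfolding p_def by (rule vip_basis_lcomb[OF oacc i])
      finally show ?thesis unfolding w'_def vip_def by (simp add: sum_distrib_left[symmetric] mult.left_commute)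
    qed
    have wa: "vip w' (acc ! i) = 0" if i: "i < length acc" for i using aw[OF i] vip_cnj by (metis complex_cnj_zero)
    have oacc': "orthL acc'"
      unfolding orth_def acc'_def
    proof (intro conjI allI impI)
      fix i assume "i < length (acc @ [w'])"
      then show "sv ((acc @ [w']) ! i)" using svacc svw unfolding w'_def sv_def
        by (cases "i < length acc") (auto simp: nth_append)
    next
      fix i j assume i: "i < length (acc @ [w'])" and j: "j < length (acc @ [w'])"
      show "vip ((acc @ [w']) ! i) ((acc @ [w']) ! j) = (if i = j then 1 else 0)"
        using i j oacc aw wa ww unfolding orth_def
        by (cases "i < length acc"; cases "j < length acc") (auto simp: nth_append)
    qed
    note IH = Cons.IH[OF oacc' svs]
    have w'_span: "inspL (acc @ v # vs) w'"
    proof -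
      have "inspL (acc @ v # vs) p" by (rule p_span) (intro ballI inspL_base, auto)
      moreover have "inspL (acc @ v # vs) v" by (intro inspL_base) auto
      ultimately show ?thesis unfolding w'_def w_def by (intro insp_scale insp_diff)
    qed
    have mono': "\<forall>x\<in>set (acc' @ vs). inspL (acc @ v # vs) x"
      using w'_span mono unfolding acc'_def by auto
    have "\<forall>l\<in>set (gs acc' vs). inspL (acc @ v # vs) l" using IH mono' inspL_trans by blast
    moreover have "inspL (gs acc' vs) v"
    proof -
      have accin: "\<forall>x\<in>set acc. inspL (gs acc' vs) x" using IH unfolding acc'_def by auto
      have "inspL (gs acc' vs) w'" using IH unfolding acc'_def by auto
      then have "inspL (gs acc' vs) (\<lambda>x. (1 / c) * w' x)" by (rule insp_scale)
      moreover have "(\<lambda>x. (1 / c) * w' x) = w" unfolding w'_def c_def using pos by (auto simp: field_simps)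
      ultimately have "inspL (gs acc' vs) w" by simp
      moreover have "inspL (gs acc' vs) p" using p_span accin by blast
      ultimately have "inspL (gs acc' vs) (\<lambda>x. w x + p x)" by (rule insp_add)
      moreover have "(\<lambda>x. w x + p x) = v" unfolding w_def by simp
      ultimately show ?thesis by simp
    qed
    moreover have "\<forall>u\<in>set (acc @ vs). inspL (gs acc' vs) u" using IH unfolding acc'_def by auto
    moreover have "\<exists>r. gs acc' vs = acc @ r" using IH unfolding acc'_def by auto
    ultimately show ?thesis using IH gseq by auto
  qed
qed


lemma insp_cong: "(\<And>i. i < k \<Longrightarrow> b i = b' i) \<Longrightarrow> insp k b u = insp k b' u"
  unfolding insp_def using lcomb_cong[of k _ _ b b'] by metis

lemma orth_cong: "(\<And>i. i < k \<Longrightarrow> b i = b' i) \<Longrightarrow> orth k b = orth k b'"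
  unfolding orth_def by auto

lemma lcomb_zero: "lcomb 0 c b = (\<lambda>x. 0)"
  unfolding lcomb_def by simp

lemma insp_zero: "insp 0 b u \<Longrightarrow> u = (\<lambda>x. 0)"
  unfolding insp_def lcomb_def by auto

lemma lcomb_Cons: "lcomb (Suc n) c ((!) (a # r)) = (\<lambda>x. c 0 * a x + lcomb n (\<lambda>j. c (Suc j)) ((!) r) x)"
  unfolding lcomb_def by (rule ext) (subst sum.lessThan_Suc_shift, simp)

lemma vip_add_left: "vip (\<lambda>x. u x + v x) w = vip u w + vip v w"
  unfolding vip_def by (simp add: sum.distrib ring_distribs)

lemma vip_add_right: "vip w (\<lambda>x. u x + v x) = vip w u + vip w v"
  unfolding vip_def by (simp add: sum.distrib ring_distribs)

lemma vip_scale_left: "vip (\<lambda>x. a * u x) w = cnj a * vip u w"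
  unfolding vip_def by (simp add: sum_distrib_left mult.assoc)

lemma vip_scale_right: "vip w (\<lambda>x. a * u x) = a * vip w u"
  unfolding vip_def by (simp add: sum_distrib_left mult.left_commute)

lemma HT_add: "HT (\<lambda>x. u x + v x) = (\<lambda>x. HT u x + HT v x)"
  unfolding HT_def AT_def ADT_def by (rule ext) (auto simp: sum.distrib ring_distribs)

lemma HT_span:
  assumes "\<forall>j<k. insp k b (HT (b j))" "insp k b u"
  shows "insp k b (HT u)"
proof -
  obtain c where "u = lcomb k c b" using assms(2) insp_def by blast
  then have "HT u = lcomb k c (\<lambda>j. HT (b j))" by (simp add: HT_lcomb)
  then show ?thesis by (simp add: insp_lcomb assms(1))
qed

lemma eigen_in_span:
  assumes o: "orth k b" and k: "k > 0" and inv: "\<forall>j<k. insp k b (HT (b j))"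
  shows "\<exists>l e. insp k b e \<and> e \<noteq> (\<lambda>x. 0) \<and> sv e \<and> HT e = (\<lambda>x. complex_of_real l * e x)"
proof -
  define M where "M = mat k k (\<lambda>(i, j). vip (b i) (HT (b j)))"
  have Mc: "M \<in> carrier_mat k k" unfolding M_def by simp
  obtain \<mu> c where c: "c \<in> carrier_vec k" "c \<noteq> 0\<^sub>v k" "M *\<^sub>v c = \<mu> \<cdot>\<^sub>v c"
    using complex_mat_has_eigenvector[OF Mc k] by blast
  define e where "e = lcomb k (\<lambda>i. c $ i) b"
  have sve: "sv e" unfolding e_def by (rule sv_lcomb) (use o in \<open>auto simp: orth_def\<close>)
  have ins: "insp k b e" unfolding e_def insp_def by blast
  have Hb: "HT (b j) = lcomb k (\<lambda>i. M $$ (i, j)) b" if "j < k" for j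
  proof -
    have "lcomb k (\<lambda>i. vip (b i) (HT (b j))) b = lcomb k (\<lambda>i. M $$ (i, j)) b"
      by (rule lcomb_cong) (use that in \<open>auto simp: M_def\<close>)
    then show ?thesis using orth_expand[OF o inv[rule_format, OF that]] by simp
  qed
  have He: "HT e = (\<lambda>x. \<mu> * e x)"
  proof (rule ext)
    fix x
    have "HT e x = (\<Sum>j<k. c $ j * (\<Sum>i<k. M $$ (i, j) * b i x))"
    proof -
      have "HT e = lcomb k (\<lambda>i. c $ i) (\<lambda>j. HT (b j))" by (simp add: e_def HT_lcomb)
      then have "HT e x = (\<Sum>j<k. c $ j * HT (b j) x)" by (simp add: lcomb_def)
      also have "\<dots> = (\<Sum>j<k. c $ j * (\<Sum>i<k. M $$ (i, j) * b i x))"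
        using Hb by (intro sum.cong refl) (simp add: lcomb_def)
      finally show ?thesis .
    qed
    also have "\<dots> = (\<Sum>j<k. \<Sum>i<k. M $$ (i, j) * c $ j * b i x)"
      by (simp add: sum_distrib_left mult.commute mult.left_commute)
    also have "\<dots> = (\<Sum>i<k. \<Sum>j<k. M $$ (i, j) * c $ j * b i x)"
      by (rule sum.swap)
    also have "\<dots> = (\<Sum>i<k. (\<Sum>j<k. M $$ (i, j) * c $ j) * b i x)"
      by (simp add: sum_distrib_right)
    also have "\<dots> = (\<Sum>i<k. (\<mu> * c $ i) * b i x)"
    proof (intro sum.cong refl)
      fix i assume i: "i \<in> {..<k}"
      have "(M *\<^sub>v c) $ i = (\<Sum>j<k. M $$ (i, j) * c $ j)"
        using i Mc c(1) by (auto simp: scalar_prod_def lessThan_atLeast0 row_def)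
      then show "(\<Sum>j<k. M $$ (i, j) * c $ j) * b i x = \<mu> * c $ i * b i x"
        using c(3) i c(1) by simp
    qed
    also have "\<dots> = \<mu> * e x" unfolding e_def lcomb_def by (simp add: sum_distrib_left mult.assoc)
    finally show "HT e x = \<mu> * e x" .
  qed
  have "\<exists>i<k. c $ i \<noteq> 0"
  proof (rule ccontr)
    assume "\<not> (\<exists>i<k. c $ i \<noteq> 0)"
    then have "c = 0\<^sub>v k" using c(1) by (intro eq_vecI) auto
    then show False using c(2) by simp
  qed
  then obtain i where i: "i < k" "c $ i \<noteq> 0" by blast
  have "vip (b i) e = c $ i" unfolding e_def by (rule vip_basis_lcomb[OF o i(1)])
  then have ne: "e \<noteq> (\<lambda>x. 0)" using i(2) unfolding vip_def by auto
  have ee: "vip e e \<noteq> 0" using ne vip_self_zero[OF sve] by blast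
  have "\<mu> * vip e e = vip e (HT e)" unfolding He by (simp add: vip_scale_right)
  also have "\<dots> = vip (AT e) (AT e)" by (rule vip_HT_right)
  finally have "\<mu> = vip (AT e) (AT e) / vip e e" using ee by (simp add: field_simps)
  also have "\<dots> = complex_of_real (Re (vip (AT e) (AT e)) / Re (vip e e))"
    by (subst (1 2) vip_self_real) simp
  finally have "HT e = (\<lambda>x. complex_of_real (Re (vip (AT e) (AT e)) / Re (vip e e)) * e x)"
    using He by simp
  then show ?thesis using ins ne sve by blast
qed


lemma normalize_unit:
  assumes "sv u" "u \<noteq> (\<lambda>x. 0)"
  shows "vip (\<lambda>x. complex_of_real (1 / sqrt (Re (vip u u))) * u x) (\<lambda>x. complex_of_real (1 / sqrt (Re (vip u u))) * u x) = 1"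
    and "Re (vip u u) > 0"
proof -
  have "vip u u \<noteq> 0" using assms vip_self_zero by blast
  then show pos: "Re (vip u u) > 0" using vip_self_nonneg[of u] vip_self_real[of u]
    by (metis less_eq_real_def of_real_0)
  define c where "c = complex_of_real (1 / sqrt (Re (vip u u)))"
  have "vip (\<lambda>x. c * u x) (\<lambda>x. c * u x) = cnj c * c * vip u u"
    by (simp add: vip_scale_left vip_scale_right mult.assoc)
  also have "\<dots> = complex_of_real ((1 / sqrt (Re (vip u u))) * (1 / sqrt (Re (vip u u))) * Re (vip u u))"
    unfolding c_def by (subst (3) vip_self_real) (simp only: of_real_mult complex_cnj_complex_of_real)
  also have "(1 / sqrt (Re (vip u u))) * (1 / sqrt (Re (vip u u))) * Re (vip u u) = 1"
    using pos by (simp add: real_sqrt_mult_self)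
  finally show "vip (\<lambda>x. c * u x) (\<lambda>x. c * u x) = 1" by simp
qed

lemma vip_zero_left: "vip (\<lambda>x. 0) u = 0"
  unfolding vip_def by simp

lemma HT_zero: "HT (\<lambda>x. 0) = (\<lambda>x. 0)"
  unfolding HT_def AT_def ADT_def by auto

lemma spectral:
  "orth k b \<Longrightarrow> (\<forall>j<k. insp k b (HT (b j))) \<Longrightarrow> insp k b v \<Longrightarrow> sv v \<Longrightarrow> v \<noteq> (\<lambda>x. 0) \<Longrightarrow>
   \<exists>l e. sv e \<and> e \<noteq> (\<lambda>x. 0) \<and> HT e = (\<lambda>x. complex_of_real l * e x) \<and>
     Re (vip v (HT v)) \<le> l * Re (vip v v)"
proof (induction k arbitrary: b v rule: less_induct)
  case (less k)
  note ob = less.prems(1) and inv = less.prems(2) and vin = less.prems(3) and svv = less.prems(4)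
    and vne = less.prems(5)
  have k: "k > 0" using vin vne insp_zero by (cases k) auto
  obtain l e where e: "insp k b e" "e \<noteq> (\<lambda>x. 0)" "sv e" "HT e = (\<lambda>x. complex_of_real l * e x)"
    using eigen_in_span[OF ob k inv] by blast
  define e' where "e' = (\<lambda>x. complex_of_real (1 / sqrt (Re (vip e e))) * e x)"
  have e'1: "vip e' e' = 1" unfolding e'_def by (rule normalize_unit(1)[OF e(3) e(2)])
  have HTe': "HT e' = (\<lambda>x. complex_of_real l * e' x)"
    unfolding e'_def HT_scale e(4) by (simp add: mult.left_commute)
  have sve': "sv e'" using e(3) unfolding e'_def sv_def by simp
  have e'ne: "e' \<noteq> (\<lambda>x. 0)" using e'1 vip_zero_left by force
  define bl where "bl = map b [0..<k]"
  have bl: "length bl = k" "\<And>i. i < k \<Longrightarrow> bl ! i = b i" unfolding bl_def by auto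
  have ib: "insp k b u = inspL bl u" for u using bl by (metis insp_cong)
  have e'b: "insp k b e'" unfolding e'_def by (rule insp_scale[OF e(1)])
  define L where "L = gs [e'] bl"
  have o1: "orthL [e']" using sve' e'1 unfolding orth_def by auto
  have svbl: "\<forall>v\<in>set bl. sv v" using ob unfolding bl_def orth_def by auto
  note G = gs_props[OF o1 svbl, folded L_def]
  have oL: "orthL L" using G by blast
  obtain r where Lr: "L = e' # r" using G by auto
  have Lin: "\<forall>x\<in>set L. insp k b x"
  proof
    fix x assume "x \<in> set L"
    then have "inspL ([e'] @ bl) x" using G by blast
    moreover have "\<forall>y\<in>set ([e'] @ bl). inspL bl y" using e'b ib by (auto intro: inspL_base)
    ultimately show "insp k b x" using ib inspL_trans by blast
  qed
  have blL: "\<forall>y\<in>set bl. inspL L y" using G by auto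
  have b_to_L: "insp k b u \<Longrightarrow> inspL L u" for u using ib blL inspL_trans by blast
  have "length L \<le> k" by (rule orth_len(1)[OF ob oL]) (use Lin in auto)
  then have rk: "length r < k" using Lr by simp
  have oL1: "\<forall>i<Suc (length r). sv ((e' # r) ! i)"
    and oL2: "\<forall>i<Suc (length r). \<forall>j<Suc (length r). vip ((e' # r) ! i) ((e' # r) ! j) = (if i = j then 1 else 0)"
    using oL unfolding Lr orth_def by auto
  have or: "orthL r"
    unfolding orth_def
  proof (intro conjI allI impI)
    fix i assume "i < length r"
    then show "sv (r ! i)" using oL1[rule_format, of "Suc i"] by simp
  next
    fix i j assume "i < length r" "j < length r"
    then show "vip (r ! i) (r ! j) = (if i = j then 1 else 0)" using oL2[rule_format, of "Suc i" "Suc j"] by simp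
  qed
  have e'r: "vip e' (r ! i) = 0" if "i < length r" for i
    using oL2[rule_format, of 0 "Suc i"] that by simp
  have e'r_lcomb: "vip e' (lcomb (length r) c ((!) r)) = 0" for c
    by (simp add: vip_lcomb_right e'r)
  have HT_e'_orth: "vip e' (HT x) = l * vip e' x" for x
  proof -
    have "vip e' (HT x) = vip (HT e') x" by (simp add: vip_HT_right vip_HT_left)
    also have "\<dots> = l * vip e' x" unfolding HTe' by (simp add: vip_scale_left)
    finally show ?thesis .
  qed
  have expandL: "u = (\<lambda>y. vip e' u * e' y + lcomb (length r) (\<lambda>i. vip (r ! i) u) ((!) r) y)"
    if "inspL L u" for u
  proof -
    have "u = lcomb (length L) (\<lambda>i. vip (L ! i) u) ((!) L)" by (rule orth_expand[OF oL that])
    also have "\<dots> = (\<lambda>y. vip e' u * e' y + lcomb (length r) (\<lambda>i. vip (r ! i) u) ((!) r) y)"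
      unfolding Lr by (simp add: lcomb_Cons)
    finally show ?thesis .
  qed
  have invr: "\<forall>j<length r. insp (length r) ((!) r) (HT (r ! j))"
  proof (intro allI impI)
    fix j assume j: "j < length r"
    have "insp k b (r ! j)" using Lin j unfolding Lr by auto
    then have "insp k b (HT (r ! j))" by (rule HT_span[OF inv])
    then have "inspL L (HT (r ! j))" by (rule b_to_L)
    then have "HT (r ! j) = (\<lambda>y. vip e' (HT (r ! j)) * e' y + lcomb (length r) (\<lambda>i. vip (r ! i) (HT (r ! j))) ((!) r) y)"
      by (rule expandL)
    moreover have "vip e' (HT (r ! j)) = 0" using HT_e'_orth e'r[OF j] by simp
    ultimately have "HT (r ! j) = lcomb (length r) (\<lambda>i. vip (r ! i) (HT (r ! j))) ((!) r)" by simp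
    then show "insp (length r) ((!) r) (HT (r ! j))" unfolding insp_def by blast
  qed
  define \<alpha> where "\<alpha> = vip e' v"
  define v' where "v' = lcomb (length r) (\<lambda>i. vip (r ! i) v) ((!) r)"
  have vdec: "v = (\<lambda>y. \<alpha> * e' y + v' y)" unfolding \<alpha>_def v'_def by (rule expandL[OF b_to_L[OF vin]])
  have sv': "sv v'" unfolding v'_def by (rule sv_lcomb) (use or in \<open>auto simp: orth_def\<close>)
  have v'in: "insp (length r) ((!) r) v'" unfolding v'_def insp_def by blast
  have ev': "vip e' v' = 0" unfolding v'_def by (rule e'r_lcomb)
  have v'e: "vip v' e' = 0" using ev' vip_cnj by (metis complex_cnj_zero)
  have eHv': "vip e' (HT v') = 0" using HT_e'_orth ev' by simp
  have HTv: "HT v = (\<lambda>y. \<alpha> * (complex_of_real l * e' y) + HT v' y)"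
    by (subst vdec) (simp add: HT_add HT_scale HTe')
  have vHv: "vip v (HT v) = cnj \<alpha> * \<alpha> * complex_of_real l + vip v' (HT v')"
    unfolding HTv by (subst vdec) (simp add: vip_add_left vip_add_right vip_scale_left vip_scale_right
      e'1 eHv' v'e mult.assoc)
  have vv: "vip v v = cnj \<alpha> * \<alpha> + vip v' v'"
    by (subst (1 2) vdec) (simp add: vip_add_left vip_add_right vip_scale_left vip_scale_right e'1 ev' v'e)
  define a2 where "a2 = (cmod \<alpha>)^2"
  have a2: "a2 \<ge> 0" unfolding a2_def by simp
  have Re1: "Re (vip v (HT v)) = a2 * l + Re (vip v' (HT v'))"
    unfolding vHv a2_def cnj_mult_self by simp
  have Re2: "Re (vip v v) = a2 + Re (vip v' v')"
    unfolding vv a2_def cnj_mult_self by simp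
  show ?case
  proof (cases "v' = (\<lambda>x. 0)")
    case True
    then have "Re (vip v (HT v)) = l * Re (vip v v)" using Re1 Re2 by (simp add: HT_zero vip_zero_left)
    then show ?thesis using sve' e'ne HTe' by auto
  next
    case False
    obtain l2 e2 where e2: "sv e2" "e2 \<noteq> (\<lambda>x. 0)" "HT e2 = (\<lambda>x. complex_of_real l2 * e2 x)"
      "Re (vip v' (HT v')) \<le> l2 * Re (vip v' v')"
      using less.IH[OF rk or invr v'in sv' False] by blast
    have nv': "Re (vip v' v') \<ge> 0" by (rule vip_self_nonneg)
    show ?thesis
    proof (cases "l2 \<le> l")
      case True
      have "Re (vip v (HT v)) \<le> a2 * l + l * Re (vip v' v')"
        using Re1 e2(4) mult_right_mono[OF True nv'] by linarith
      then have "Re (vip v (HT v)) \<le> l * Re (vip v v)" using Re2 by (simp add: algebra_simps)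
      then show ?thesis using sve' e'ne HTe' by auto
    next
      case False
      have "a2 * l \<le> a2 * l2" using False a2 by (intro mult_left_mono) auto
      then have "Re (vip v (HT v)) \<le> a2 * l2 + l2 * Re (vip v' v')"
        using Re1 e2(4) by linarith
      then have "Re (vip v (HT v)) \<le> l2 * Re (vip v v)" using Re2 by (simp add: algebra_simps)
      then show ?thesis using e2 by auto
    qed
  qed
qed


lemma RT_scale: "RT g (\<lambda>x. a * u x) = (\<lambda>x. a * RT g u x)"
  unfolding RT_def by auto

lemma HT_eig_span:
  assumes "\<forall>i<k. HT (b i) = (\<lambda>x. complex_of_real l * b i x)" "insp k b u"
  shows "HT u = (\<lambda>x. complex_of_real l * u x)"
proof -
  obtain c where c: "u = lcomb k c b" using assms(2) insp_def by blast
  have "HT u = lcomb k c (\<lambda>i. HT (b i))" unfolding c by (rule HT_lcomb)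
  also have "\<dots> = lcomb k c (\<lambda>i x. complex_of_real l * b i x)" using assms(1) by (intro lcomb_cong) auto
  also have "\<dots> = (\<lambda>x. complex_of_real l * u x)" unfolding c lcomb_def
    by (simp add: sum_distrib_left mult.left_commute)
  finally show ?thesis .
qed

lemma RT_span:
  assumes "g \<in> carrier G" "\<forall>i<k. insp k' b' (RT g (b i))" "insp k b u"
  shows "insp k' b' (RT g u)"
proof -
  obtain c where c: "u = lcomb k c b" using assms(3) insp_def by blast
  have "RT g u = lcomb k c (\<lambda>i. RT g (b i))" unfolding c by (rule RT_lcomb)
  then show ?thesis using insp_lcomb assms(2) by simp
qed

definition adm :: "real \<Rightarrow> nat \<Rightarrow> (nat \<Rightarrow> 'a \<Rightarrow> complex) \<Rightarrow> bool" where
  "adm l m b \<longleftrightarrow> m > 0 \<and> orth m b \<and> (\<forall>i<m. HT (b i) = (\<lambda>x. complex_of_real l * b i x))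
     \<and> (\<forall>g\<in>carrier G. \<forall>i<m. insp m b (RT g (b i)))"

lemma orbit_basis:
  assumes svu: "sv u" and une: "u \<noteq> (\<lambda>x. 0)" and Hu: "HT u = (\<lambda>x. complex_of_real l * u x)"
  shows "\<exists>L. adm l (length L) ((!) L) \<and> inspL L u \<and>
     (\<forall>x\<in>set L. \<exists>ol. set ol \<subseteq> (\<lambda>g. RT g u) ` carrier G \<and> inspL ol x)"
proof -
  obtain gl where gl: "set gl = carrier G" using finite_list[OF fin] by blast
  define ol where "ol = map (\<lambda>g. RT g u) gl"
  define L where "L = gs [] ol"
  have o0: "orthL []" unfolding orth_def by simp
  have svol: "\<forall>v\<in>set ol. sv v" unfolding ol_def by auto
  note P = gs_props[OF o0 svol, folded L_def]
  have oL: "orthL L" and Lol: "\<forall>x\<in>set L. inspL ol x" and olL: "\<forall>x\<in>set ol. inspL L x" using P by auto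
  have uol: "u \<in> set ol" unfolding ol_def using gl RT_one[OF svu] by (metis image_eqI image_set one_closed)
  have uL: "inspL L u" using olL uol by blast
  have Lne: "L \<noteq> []"
  proof
    assume "L = []"
    then have "insp 0 ((!) L) u" using uL by simp
    then show False using une insp_zero by blast
  qed
  have HTol: "\<forall>i<length ol. HT (ol ! i) = (\<lambda>x. complex_of_real l * (ol ! i) x)"
  proof (intro allI impI)
    fix i assume "i < length ol"
    then obtain g where g: "g \<in> carrier G" "ol ! i = RT g u" unfolding ol_def using gl nth_mem[of i gl] by auto
    show "HT (ol ! i) = (\<lambda>x. complex_of_real l * (ol ! i) x)"
      unfolding g(2) HT_RT[OF g(1)] Hu RT_scale ..
  qed
  have HTL: "\<forall>i<length L. HT (L ! i) = (\<lambda>x. complex_of_real l * (L ! i) x)"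
  proof (intro allI impI)
    fix i assume i: "i < length L"
    have "inspL ol (L ! i)" using Lol i nth_mem[OF i] by blast
    then show "HT (L ! i) = (\<lambda>x. complex_of_real l * (L ! i) x)" using HT_eig_span HTol by blast
  qed
  have RTol: "\<forall>g\<in>carrier G. \<forall>i<length ol. inspL ol (RT g (ol ! i))"
  proof (intro ballI allI impI)
    fix g i assume g: "g \<in> carrier G" and i: "i < length ol"
    then obtain h where h: "h \<in> carrier G" "ol ! i = RT h u" unfolding ol_def using gl nth_mem[of i gl] by auto
    have "RT g (ol ! i) = RT (g \<otimes> h) u" unfolding h(2) by (rule RT_RT[OF g h(1)])
    moreover have "RT (g \<otimes> h) u \<in> set ol" unfolding ol_def using gl g h(1) by auto
    ultimately show "inspL ol (RT g (ol ! i))" by (metis inspL_base)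
  qed
  have RTL: "\<forall>g\<in>carrier G. \<forall>i<length L. inspL L (RT g (L ! i))"
  proof (intro ballI allI impI)
    fix g i assume g: "g \<in> carrier G" and i: "i < length L"
    have "inspL ol (L ! i)" using Lol i nth_mem[OF i] by blast
    moreover have "\<forall>j<length ol. inspL ol (RT g (ol ! j))" using RTol g by blast
    ultimately have "inspL ol (RT g (L ! i))" using RT_span[OF g] by blast
    then show "inspL L (RT g (L ! i))" using olL inspL_trans by blast
  qed
  have "adm l (length L) ((!) L)" unfolding adm_def using oL HTL RTL Lne by auto
  moreover have "\<forall>x\<in>set L. \<exists>ol'. set ol' \<subseteq> (\<lambda>g. RT g u) ` carrier G \<and> inspL ol' x"
    using Lol unfolding ol_def using gl by (intro ballI exI[of _ ol]) (auto simp: ol_def)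
  ultimately show ?thesis using uL by blast
qed


end

lemma lcomb_Suc: "lcomb (Suc k) c b = (\<lambda>x. lcomb k c b x + c k * b k x)"
  unfolding lcomb_def by simp

locale irr_ctx = cf +
  fixes l :: real and m :: nat and b :: "nat \<Rightarrow> 'a \<Rightarrow> complex"
  assumes admb: "adm l m b" and minimal: "\<And>m' b'. adm l m' b' \<Longrightarrow> m \<le> m'" and lpos: "l > 0"
begin

lemma mpos: "m > 0" and ob: "orth m b"
  and Hb: "\<And>i. i < m \<Longrightarrow> HT (b i) = (\<lambda>x. complex_of_real l * b i x)"
  and RTb: "\<And>g i. g \<in> carrier G \<Longrightarrow> i < m \<Longrightarrow> insp m b (RT g (b i))"
  using admb unfolding adm_def by auto

lemma svb: "i < m \<Longrightarrow> sv (b i)" using ob unfolding orth_def by auto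

lemma vbb: "i < m \<Longrightarrow> j < m \<Longrightarrow> vip (b i) (b j) = (if i = j then 1 else 0)"
  using ob unfolding orth_def by auto

definition rho :: "'a \<Rightarrow> complex mat" where
  "rho g = mat m m (\<lambda>(i, j). vip (b i) (RT g (b j)))"

lemma rho_carrier[simp]: "rho g \<in> carrier_mat m m" unfolding rho_def by simp

lemma rho_dim[simp]: "dim_row (rho g) = m" "dim_col (rho g) = m" unfolding rho_def by simp_all

lemma rho_entry: "i < m \<Longrightarrow> j < m \<Longrightarrow> rho g $$ (i, j) = vip (b i) (RT g (b j))"
  unfolding rho_def by simp

lemma RT_b_expand: assumes g: "g \<in> carrier G" and j: "j < m"
  shows "RT g (b j) = lcomb m (\<lambda>i. rho g $$ (i, j)) b"
proof -
  have "RT g (b j) = lcomb m (\<lambda>i. vip (b i) (RT g (b j))) b" by (rule orth_expand[OF ob RTb[OF g j]])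
  also have "\<dots> = lcomb m (\<lambda>i. rho g $$ (i, j)) b" using j by (intro lcomb_cong) (auto simp: rho_entry)
  finally show ?thesis .
qed

lemma rho_mult_entry:
  assumes g: "g \<in> carrier G" and h: "h \<in> carrier G" and i: "i < m" and j: "j < m"
  shows "rho (g \<otimes> h) $$ (i, j) = (\<Sum>p<m. rho g $$ (i, p) * rho h $$ (p, j))"
proof -
  have "rho (g \<otimes> h) $$ (i, j) = vip (b i) (RT g (RT h (b j)))"
    using rho_entry[OF i j] RT_RT[OF g h] by simp
  also have "\<dots> = vip (b i) (lcomb m (\<lambda>p. rho h $$ (p, j)) (\<lambda>p. RT g (b p)))"
    by (simp add: RT_b_expand[OF h j] RT_lcomb)
  also have "\<dots> = (\<Sum>p<m. rho h $$ (p, j) * rho g $$ (i, p))"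
    by (simp add: vip_lcomb_right rho_entry i)
  finally show ?thesis by (simp add: mult.commute)
qed

lemma rho_one: "rho \<one> = 1\<^sub>m m"
  by (rule eq_matI) (auto simp: rho_entry RT_one svb vbb)

lemma rho_mult: "g \<in> carrier G \<Longrightarrow> h \<in> carrier G \<Longrightarrow> rho (g \<otimes> h) = rho g * rho h"
  by (rule eq_matI) (auto simp: rho_mult_entry scalar_prod_def lessThan_atLeast0 row_def col_def)

lemma rho_rep: "is_rep G m rho"
  unfolding is_rep_def using rho_one rho_mult by auto

lemma rho_inv_entry: assumes g: "g \<in> carrier G" and i: "i < m" and j: "j < m"
  shows "rho (inv g) $$ (i, j) = cnj (rho g $$ (j, i))"
proof -
  have "rho (inv g) $$ (i, j) = vip (b i) (RT (inv g) (b j))" by (rule rho_entry[OF i j])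
  also have "\<dots> = vip (RT g (b i)) (b j)" by (rule vip_RT[OF g, symmetric])
  also have "\<dots> = cnj (vip (b j) (RT g (b i)))" by (simp add: vip_cnj)
  finally show ?thesis by (simp add: rho_entry i j)
qed

lemma RT_vec: assumes g: "g \<in> carrier G" and w: "w \<in> carrier_vec m"
  shows "RT g (lcomb m (\<lambda>i. w $ i) b) = lcomb m (\<lambda>i. (rho g *\<^sub>v w) $ i) b"
proof -
  have "RT g (lcomb m (\<lambda>i. w $ i) b) = lcomb m (\<lambda>i. w $ i) (\<lambda>j. RT g (b j))" by (rule RT_lcomb)
  also have "\<dots> = lcomb m (\<lambda>i. w $ i) (\<lambda>j. lcomb m (\<lambda>i. rho g $$ (i, j)) b)"
    using RT_b_expand[OF g] by (intro lcomb_cong) auto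
  also have "\<dots> = lcomb m (\<lambda>i. (rho g *\<^sub>v w) $ i) b"
  proof (rule ext)
    fix x
    have "lcomb m (\<lambda>i. w $ i) (\<lambda>j. lcomb m (\<lambda>i. rho g $$ (i, j)) b) x
        = (\<Sum>j<m. \<Sum>i<m. w $ j * rho g $$ (i, j) * b i x)"
      by (simp add: lcomb_def sum_distrib_left mult.assoc)
    also have "\<dots> = (\<Sum>i<m. \<Sum>j<m. w $ j * rho g $$ (i, j) * b i x)" by (rule sum.swap)
    also have "\<dots> = (\<Sum>i<m. (\<Sum>j<m. rho g $$ (i, j) * w $ j) * b i x)"
      by (intro sum.cong refl) (simp add: sum_distrib_right sum_distrib_left ac_simps)
    also have "\<dots> = lcomb m (\<lambda>i. (rho g *\<^sub>v w) $ i) b x"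
      unfolding lcomb_def using w
      by (intro sum.cong refl) (auto simp: scalar_prod_def lessThan_atLeast0 row_def mult.commute)
    finally show "lcomb m (\<lambda>i. w $ i) (\<lambda>j. lcomb m (\<lambda>i. rho g $$ (i, j)) b) x = lcomb m (\<lambda>i. (rho g *\<^sub>v w) $ i) b x"
      by simp
  qed
  finally show ?thesis .
qed

lemma coeff_unique:
  assumes v: "v \<in> carrier_vec m" and v': "v' \<in> carrier_vec m"
    and eq: "lcomb m (\<lambda>i. v $ i) b = lcomb m (\<lambda>i. v' $ i) b"
  shows "v = v'"
proof (rule eq_vecI)
  fix i assume "i < dim_vec v'"
  then have i: "i < m" using v' by auto
  show "v $ i = v' $ i" using vip_basis_lcomb[OF ob i, of "\<lambda>i. v $ i"] vip_basis_lcomb[OF ob i, of "\<lambda>i. v' $ i"] eq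
    by simp
qed (use v v' in auto)


lemma lcomb_vec_add:
  assumes "v1 \<in> carrier_vec m" "v2 \<in> carrier_vec m"
  shows "lcomb m (\<lambda>i. (v1 + a \<cdot>\<^sub>v v2) $ i) b = (\<lambda>x. lcomb m (\<lambda>i. v1 $ i) b x + a * lcomb m (\<lambda>i. v2 $ i) b x)"
proof -
  have "lcomb m (\<lambda>i. (v1 + a \<cdot>\<^sub>v v2) $ i) b = lcomb m (\<lambda>i. v1 $ i + a * v2 $ i) b"
    using assms by (intro lcomb_cong) auto
  then show ?thesis by (simp add: lcomb_def sum.distrib ring_distribs sum_distrib_left mult.assoc)
qed

lemma rho_irrep: "is_irrep G m rho"
  unfolding is_irrep_def
proof (intro conjI allI impI rho_rep mpos)
  fix W assume inv: "is_invariant G m rho W"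
  have sub: "is_subspace m W" using inv is_invariant_def by blast
  have Wc: "W \<subseteq> carrier_vec m" using sub unfolding is_subspace_def by blast
  have W0: "0\<^sub>v m \<in> W" using sub unfolding is_subspace_def by blast
  have Wadd: "\<And>v w. v \<in> W \<Longrightarrow> w \<in> W \<Longrightarrow> v + w \<in> W" using sub unfolding is_subspace_def by blast
  have Wsm: "\<And>c v. v \<in> W \<Longrightarrow> c \<cdot>\<^sub>v v \<in> W" using sub unfolding is_subspace_def by blast
  have Winv: "\<And>g v. g \<in> carrier G \<Longrightarrow> v \<in> W \<Longrightarrow> rho g *\<^sub>v v \<in> W"
    using inv unfolding is_invariant_def by blast
  show "W = {0\<^sub>v m} \<or> W = carrier_vec m"
  proof (cases "W = {0\<^sub>v m}")
    case True
    then show ?thesis by simp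
  next
    case False
    then obtain w where wW: "w \<in> W" and wne: "w \<noteq> 0\<^sub>v m" using W0 by blast
    have wc: "w \<in> carrier_vec m" using wW Wc by auto
    define u where "u = lcomb m (\<lambda>i. w $ i) b"
    have svu: "sv u" unfolding u_def by (rule sv_lcomb) (use svb in auto)
    have "\<exists>i<m. w $ i \<noteq> 0"
    proof (rule ccontr)
      assume "\<not> (\<exists>i<m. w $ i \<noteq> 0)"
      then have "w = 0\<^sub>v m" using wc by (intro eq_vecI) auto
      then show False using wne by simp
    qed
    then obtain i where i: "i < m" "w $ i \<noteq> 0" by blast
    have "vip (b i) u = w $ i" unfolding u_def by (rule vip_basis_lcomb[OF ob i(1)])
    then have une: "u \<noteq> (\<lambda>x. 0)" using i(2) unfolding vip_def by auto
    have Hu: "HT u = (\<lambda>x. complex_of_real l * u x)"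
      by (rule HT_eig_span[of m b]) (use Hb in \<open>auto simp: u_def insp_def\<close>)
    obtain L where L: "adm l (length L) ((!) L)" "inspL L u"
      "\<forall>x\<in>set L. \<exists>ol. set ol \<subseteq> (\<lambda>g. RT g u) ` carrier G \<and> inspL ol x"
      using orbit_basis[OF svu une Hu] by blast
    define Wf where "Wf x \<longleftrightarrow> (\<exists>v\<in>W. x = lcomb m (\<lambda>i. v $ i) b)" for x
    have Wf_lcomb: "Wf (lcomb k c ((!) X))" if XWf: "\<forall>x\<in>set X. Wf x" and kle: "k \<le> length X" for X k c
      using kle
    proof (induction k)
      case 0
      have "lcomb 0 c ((!) X) = lcomb m (\<lambda>i. 0\<^sub>v m $ i) b" by (simp add: lcomb_def)
      then show ?case using W0 Wf_def by blast
    next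
      case (Suc k)
      then obtain v1 where v1: "v1 \<in> W" "lcomb k c ((!) X) = lcomb m (\<lambda>i. v1 $ i) b" using Wf_def by auto
      have "X ! k \<in> set X" using Suc.prems by simp
      then obtain v2 where v2: "v2 \<in> W" "X ! k = lcomb m (\<lambda>i. v2 $ i) b" using XWf Wf_def by auto
      have vc: "v1 \<in> carrier_vec m" "v2 \<in> carrier_vec m" using v1(1) v2(1) Wc by auto
      have "lcomb (Suc k) c ((!) X) = lcomb m (\<lambda>i. (v1 + c k \<cdot>\<^sub>v v2) $ i) b"
        unfolding lcomb_Suc v1(2) v2(2) lcomb_vec_add[OF vc, of "c k"] by simp
      moreover have "v1 + c k \<cdot>\<^sub>v v2 \<in> W" using v1(1) v2(1) Wadd Wsm by blast
      ultimately show ?case using Wf_def by blast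
    qed
    have Wf_insp: "Wf x" if "\<forall>y\<in>set X. Wf y" "inspL X x" for X x
      using that Wf_lcomb unfolding insp_def by auto
    have orbit_Wf: "Wf (RT g u)" if g: "g \<in> carrier G" for g
    proof -
      have "RT g u = lcomb m (\<lambda>i. (rho g *\<^sub>v w) $ i) b" unfolding u_def by (rule RT_vec[OF g wc])
      moreover have "rho g *\<^sub>v w \<in> W" using Winv[OF g wW] .
      ultimately show ?thesis using Wf_def by blast
    qed
    have L_Wf: "\<forall>x\<in>set L. Wf x"
    proof
      fix x assume "x \<in> set L"
      then obtain ol where ol: "set ol \<subseteq> (\<lambda>g. RT g u) ` carrier G" "inspL ol x" using L(3) by blast
      have "\<forall>y\<in>set ol. Wf y" using ol(1) orbit_Wf by auto
      then show "Wf x" using Wf_insp ol(2) by blast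
    qed
    have L_b: "\<forall>x\<in>set L. insp m b x"
    proof
      fix x assume "x \<in> set L"
      then obtain v where "v \<in> W" "x = lcomb m (\<lambda>i. v $ i) b" using L_Wf Wf_def by blast
      then show "insp m b x" unfolding insp_def by blast
    qed
    have oL: "orthL L" using L(1) adm_def by blast
    have "length L \<le> m" by (rule orth_len(1)[OF ob oL]) (use L_b in auto)
    moreover have "m \<le> length L" using minimal[OF L(1)] .
    ultimately have eqm: "length L = m" by simp
    have bL: "\<forall>j<m. inspL L (b j)" using orth_len(2)[OF ob oL] L_b eqm by auto
    have b_Wf: "\<forall>j<m. Wf (b j)" using bL Wf_insp L_Wf by blast
    have "W = carrier_vec m"
    proof (rule equalityI)
      show "W \<subseteq> carrier_vec m" by (rule Wc)
      show "carrier_vec m \<subseteq> W"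
      proof (rule subsetI)
        fix v :: "complex vec" assume v: "v \<in> carrier_vec m"
        define bl where "bl = map b [0..<m]"
        have "\<forall>y\<in>set bl. Wf y" using b_Wf unfolding bl_def by auto
        moreover have "lcomb m (\<lambda>i. v $ i) b = lcomb (length bl) (\<lambda>i. v $ i) ((!) bl)"
          unfolding bl_def length_map length_upt diff_zero by (intro lcomb_cong) auto
        ultimately have "Wf (lcomb m (\<lambda>i. v $ i) b)" using Wf_lcomb[of bl "length bl"] by auto
        then obtain v' where v': "v' \<in> W" "lcomb m (\<lambda>i. v $ i) b = lcomb m (\<lambda>i. v' $ i) b"
          using Wf_def by blast
        have "v = v'" using coeff_unique[OF v _ v'(2)] v'(1) Wc by auto
        then show "v \<in> W" using v'(1) by simp
      qed
    qed
    then show ?thesis by simp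
  qed
qed

lemma rho_nontriv: "\<not> is_trivial_rep G m rho"
proof
  assume triv: "is_trivial_rep G m rho"
  have m0: "0 < m" by (rule mpos)
  have RT0: "RT g (b 0) = b 0" if g: "g \<in> carrier G" for g
  proof -
    have "RT g (b 0) = lcomb m (\<lambda>i. rho g $$ (i, 0)) b" by (rule RT_b_expand[OF g m0])
    also have "\<dots> = lcomb m (\<lambda>i. if i = 0 then 1 else 0) b"
      using triv g m0 unfolding is_trivial_rep_def by (intro lcomb_cong) auto
    also have "\<dots> = b 0" unfolding lcomb_def using m0
      by (simp add: if_distrib[of "\<lambda>a. a * _"] sum.delta cong: if_cong)
    finally show ?thesis .
  qed
  define c where "c = b 0 \<one>"
  have const: "b 0 x = c" if x: "x \<in> carrier G" for x
  proof -
    have "b 0 x = b 0 (\<one> \<otimes> x)" using x by simp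
    also have "\<dots> = RT x (b 0) \<one>" unfolding RT_def by simp
    also have "\<dots> = c" using RT0[OF x] c_def by simp
    finally show ?thesis .
  qed
  have "complex_of_real l * vip onev (b 0) = vip onev (HT (b 0))"
    using Hb[OF m0] by (simp add: vip_scale_right)
  also have "\<dots> = vip (HT onev) (b 0)" by (simp add: vip_HT_right vip_HT_left)
  also have "\<dots> = 0" by (simp add: HT_onev vip_zero_left)
  finally have "vip onev (b 0) = 0" using lpos by simp
  moreover have "vip onev (b 0) = of_nat (card (carrier G)) * c"
    unfolding vip_def onev_def using const by simp
  moreover have "card (carrier G) > 0" using fin one_closed by (auto simp: card_gt_0_iff)
  ultimately have c0: "c = 0" by simp
  have "vip (b 0) (b 0) = 0" unfolding vip_def using const c0 by simp
  then show False using vbb[OF m0 m0] by simp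
qed


lemma cancel1: "h \<in> carrier G \<Longrightarrow> z \<in> carrier G \<Longrightarrow> inv h \<otimes> (h \<otimes> z) = z"
  by (simp add: m_assoc[symmetric])

lemma cancel2: "h \<in> carrier G \<Longrightarrow> z \<in> carrier G \<Longrightarrow> h \<otimes> (inv h \<otimes> z) = z"
  by (simp add: m_assoc[symmetric])

lemma sum_conj: "h \<in> carrier G \<Longrightarrow> (\<Sum>x\<in>carrier G. F (h \<otimes> x \<otimes> inv h)) = (\<Sum>x\<in>carrier G. F x)"
  by (rule sum.reindex_bij_witness[of _ "\<lambda>y. inv h \<otimes> y \<otimes> h" "\<lambda>x. h \<otimes> x \<otimes> inv h"])
     (auto simp: m_assoc cancel1 cancel2)

lemma mult_entry: "A \<in> carrier_mat m m \<Longrightarrow> B \<in> carrier_mat m m \<Longrightarrow> i < m \<Longrightarrow> k < m \<Longrightarrow>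
  (A * B) $$ (i, k) = (\<Sum>p<m. A $$ (i, p) * B $$ (p, k))"
  by (simp add: scalar_prod_def lessThan_atLeast0 row_def col_def)

lemma class_scalar:
  assumes F0: "\<And>h y. h \<in> carrier G \<Longrightarrow> y \<in> carrier G \<Longrightarrow> F0 (h \<otimes> y \<otimes> inv h) = F0 y"
  shows "\<exists>c. mat m m (\<lambda>(i, k). \<Sum>x\<in>carrier G. F0 x * rho x $$ (i, k)) = c \<cdot>\<^sub>m 1\<^sub>m m"
proof (rule schur_scalar[OF rho_irrep])
  define M where "M = mat m m (\<lambda>(i, k). \<Sum>x\<in>carrier G. F0 x * rho x $$ (i, k))"
  show "mat m m (\<lambda>(i, k). \<Sum>x\<in>carrier G. F0 x * rho x $$ (i, k)) \<in> carrier_mat m m" by simp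
  show "\<forall>g\<in>carrier G. rho g * mat m m (\<lambda>(i, k). \<Sum>x\<in>carrier G. F0 x * rho x $$ (i, k)) =
      mat m m (\<lambda>(i, k). \<Sum>x\<in>carrier G. F0 x * rho x $$ (i, k)) * rho g"
  proof
    fix h assume h: "h \<in> carrier G"
    have "rho h * M = M * rho h"
    proof (rule eq_matI)
      fix i k assume i: "i < dim_row (M * rho h)" and k: "k < dim_col (M * rho h)"
      have i': "i < m" and k': "k < m" using i k unfolding M_def by auto
      have Mc: "M \<in> carrier_mat m m" unfolding M_def by simp
      have "(rho h * M) $$ (i, k) = (\<Sum>p<m. rho h $$ (i, p) * (\<Sum>x\<in>carrier G. F0 x * rho x $$ (p, k)))"
        using mult_entry[OF rho_carrier Mc i' k'] i' k' unfolding M_def by simp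
      also have "\<dots> = (\<Sum>x\<in>carrier G. F0 x * (\<Sum>p<m. rho h $$ (i, p) * rho x $$ (p, k)))"
        by (simp add: sum_distrib_left sum.swap[of _ "{..<m}"] ac_simps)
      also have "\<dots> = (\<Sum>x\<in>carrier G. F0 x * rho (h \<otimes> x) $$ (i, k))"
        using h i' k' by (intro sum.cong refl) (simp add: rho_mult_entry)
      also have "\<dots> = (\<Sum>x\<in>carrier G. F0 (h \<otimes> x \<otimes> inv h) * rho (h \<otimes> x \<otimes> inv h \<otimes> h) $$ (i, k))"
      proof (intro sum.cong refl)
        fix x assume x: "x \<in> carrier G"
        have "h \<otimes> x \<otimes> inv h \<otimes> h = h \<otimes> x" using h x by (simp add: m_assoc)
        then show "F0 x * rho (h \<otimes> x) $$ (i, k) = F0 (h \<otimes> x \<otimes> inv h) * rho (h \<otimes> x \<otimes> inv h \<otimes> h) $$ (i, k)"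
          using F0[OF h x] by simp
      qed
      also have "\<dots> = (\<Sum>x\<in>carrier G. F0 x * rho (x \<otimes> h) $$ (i, k))"
        by (rule sum_conj[OF h, of "\<lambda>x. F0 x * rho (x \<otimes> h) $$ (i, k)"])
      also have "\<dots> = (\<Sum>x\<in>carrier G. F0 x * (\<Sum>p<m. rho x $$ (i, p) * rho h $$ (p, k)))"
        using h i' k' by (intro sum.cong refl) (simp add: rho_mult_entry)
      also have "\<dots> = (\<Sum>p<m. (\<Sum>x\<in>carrier G. F0 x * rho x $$ (i, p)) * rho h $$ (p, k))"
        by (simp add: sum_distrib_left sum_distrib_right sum.swap[of _ "{..<m}"] ac_simps)
      also have "\<dots> = (M * rho h) $$ (i, k)"
        using mult_entry[OF Mc rho_carrier i' k'] i' k' unfolding M_def by simp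
      finally show "(rho h * M) $$ (i, k) = (M * rho h) $$ (i, k)" .
    qed (auto simp: M_def)
    then show "rho h * mat m m (\<lambda>(i, k). \<Sum>x\<in>carrier G. F0 x * rho x $$ (i, k)) =
      mat m m (\<lambda>(i, k). \<Sum>x\<in>carrier G. F0 x * rho x $$ (i, k)) * rho h" unfolding M_def .
  qed
qed


lemma inv_mult_h: "h \<in> carrier G \<Longrightarrow> g \<in> carrier G \<Longrightarrow> inv (h \<otimes> g) \<otimes> h = inv g"
  by (simp add: inv_mult_group m_assoc)

lemma schur_orth:
  assumes i: "i < m" and j: "j < m" and k: "k < m" and q: "q < m"
  shows "(\<Sum>g\<in>carrier G. rho g $$ (i, j) * rho (inv g) $$ (q, k)) =
    (if i = k \<and> q = j then of_nat (card (carrier G)) / of_nat m else 0)"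
proof -
  define M where "M = mat m m (\<lambda>(i, k). \<Sum>g\<in>carrier G. rho g $$ (i, j) * rho (inv g) $$ (q, k))"
  have Mc: "M \<in> carrier_mat m m" unfolding M_def by simp
  have comm: "\<forall>h\<in>carrier G. rho h * M = M * rho h"
  proof
    fix h assume h: "h \<in> carrier G"
    show "rho h * M = M * rho h"
    proof (rule eq_matI)
      fix a c assume a: "a < dim_row (M * rho h)" and c: "c < dim_col (M * rho h)"
      have a': "a < m" and c': "c < m" using a c unfolding M_def by auto
      have "(rho h * M) $$ (a, c) = (\<Sum>p<m. rho h $$ (a, p) * (\<Sum>g\<in>carrier G. rho g $$ (p, j) * rho (inv g) $$ (q, c)))"
        using mult_entry[OF rho_carrier Mc a' c'] a' c' unfolding M_def by simp
      also have "\<dots> = (\<Sum>g\<in>carrier G. (\<Sum>p<m. rho h $$ (a, p) * rho g $$ (p, j)) * rho (inv g) $$ (q, c))"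
        by (simp add: sum_distrib_left sum_distrib_right sum.swap[of _ "{..<m}"] ac_simps)
      also have "\<dots> = (\<Sum>g\<in>carrier G. rho (h \<otimes> g) $$ (a, j) * rho (inv g) $$ (q, c))"
        using h a' j by (intro sum.cong refl) (simp add: rho_mult_entry)
      also have "\<dots> = (\<Sum>g\<in>carrier G. rho (h \<otimes> g) $$ (a, j) * rho (inv (h \<otimes> g) \<otimes> h) $$ (q, c))"
        using h by (intro sum.cong refl) (simp add: inv_mult_h)
      also have "\<dots> = (\<Sum>g\<in>carrier G. rho g $$ (a, j) * rho (inv g \<otimes> h) $$ (q, c))"
        by (rule sum_mult_left[OF h, of "\<lambda>g. rho g $$ (a, j) * rho (inv g \<otimes> h) $$ (q, c)"])
      also have "\<dots> = (\<Sum>g\<in>carrier G. rho g $$ (a, j) * (\<Sum>p<m. rho (inv g) $$ (q, p) * rho h $$ (p, c)))"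
        using h q c' by (intro sum.cong refl) (simp add: rho_mult_entry)
      also have "\<dots> = (\<Sum>p<m. (\<Sum>g\<in>carrier G. rho g $$ (a, j) * rho (inv g) $$ (q, p)) * rho h $$ (p, c))"
        by (simp add: sum_distrib_left sum_distrib_right sum.swap[of _ "{..<m}"] ac_simps)
      also have "\<dots> = (M * rho h) $$ (a, c)"
        using mult_entry[OF Mc rho_carrier a' c'] a' c' unfolding M_def by simp
      finally show "(rho h * M) $$ (a, c) = (M * rho h) $$ (a, c)" .
    qed (auto simp: M_def)
  qed
  obtain c where c: "M = c \<cdot>\<^sub>m 1\<^sub>m m" using schur_scalar[OF rho_irrep Mc comm] by blast
  have "(\<Sum>a<m. M $$ (a, a)) = of_nat m * c" using c by simp
  moreover have "(\<Sum>a<m. M $$ (a, a)) = of_nat (card (carrier G)) * (if q = j then 1 else 0)"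
  proof -
    have "(\<Sum>a<m. M $$ (a, a)) = (\<Sum>a<m. \<Sum>g\<in>carrier G. rho g $$ (a, j) * rho (inv g) $$ (q, a))"
      unfolding M_def by simp
    also have "\<dots> = (\<Sum>g\<in>carrier G. \<Sum>a<m. rho (inv g) $$ (q, a) * rho g $$ (a, j))"
      by (subst sum.swap) (simp add: mult.commute)
    also have "\<dots> = (\<Sum>g\<in>carrier G. rho (inv g \<otimes> g) $$ (q, j))"
    proof (intro sum.cong refl)
      fix g assume g: "g \<in> carrier G"
      show "(\<Sum>a<m. rho (inv g) $$ (q, a) * rho g $$ (a, j)) = rho (inv g \<otimes> g) $$ (q, j)"
        using rho_mult_entry[OF inv_closed[OF g] g q j] by simp
    qed
    also have "\<dots> = (\<Sum>g\<in>carrier G. (if q = j then 1 else 0))"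
      using q j by (intro sum.cong refl) (simp add: rho_one)
    finally show ?thesis by simp
  qed
  ultimately have cval: "c = of_nat (card (carrier G)) * (if q = j then 1 else 0) / of_nat m"
    using mpos by (simp add: field_simps)
  have "(\<Sum>g\<in>carrier G. rho g $$ (i, j) * rho (inv g) $$ (q, k)) = M $$ (i, k)"
    unfolding M_def using i k by simp
  also have "\<dots> = (if i = k then c else 0)" using c i k by simp
  finally show ?thesis using cval by auto
qed


definition phi :: "nat \<Rightarrow> nat \<Rightarrow> 'a \<Rightarrow> complex" where
  "phi i j = (\<lambda>x. if x \<in> carrier G then rho x $$ (i, j) else 0)"

lemma f_conj: "h \<in> carrier G \<Longrightarrow> y \<in> carrier G \<Longrightarrow> f (h \<otimes> y \<otimes> inv h) = f y"
  using cls inv_closed by (metis inv_inv)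

lemma AT_phi: "\<exists>c1. \<forall>i j. i < m \<longrightarrow> j < m \<longrightarrow> AT (phi i j) = (\<lambda>x. c1 * phi i j x)"
proof -
  obtain c1 where c1: "mat m m (\<lambda>(i, k). \<Sum>x\<in>carrier G. complex_of_int (f x) * rho x $$ (i, k)) = c1 \<cdot>\<^sub>m 1\<^sub>m m"
    using class_scalar[of "\<lambda>x. complex_of_int (f x)"] f_conj by auto
  have ent: "(\<Sum>x\<in>carrier G. complex_of_int (f x) * rho x $$ (i, p)) = (if i = p then c1 else 0)"
    if "i < m" "p < m" for i p
    using arg_cong[OF c1, of "\<lambda>M. M $$ (i, p)"] that by simp
  have "AT (phi i j) = (\<lambda>x. c1 * phi i j x)" if i: "i < m" and j: "j < m" for i j
  proof (rule ext)
    fix y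
    show "AT (phi i j) y = c1 * phi i j y"
    proof (cases "y \<in> carrier G")
      case True
      have "AT (phi i j) y = (\<Sum>x\<in>carrier G. complex_of_int (f x) * rho (x \<otimes> y) $$ (i, j))"
        unfolding AT_def phi_def using True by simp
      also have "\<dots> = (\<Sum>x\<in>carrier G. complex_of_int (f x) * (\<Sum>p<m. rho x $$ (i, p) * rho y $$ (p, j)))"
        using True i j by (intro sum.cong refl) (simp add: rho_mult_entry)
      also have "\<dots> = (\<Sum>p<m. (\<Sum>x\<in>carrier G. complex_of_int (f x) * rho x $$ (i, p)) * rho y $$ (p, j))"
        by (simp add: sum_distrib_left sum_distrib_right sum.swap[of _ "{..<m}"] ac_simps)
      also have "\<dots> = (\<Sum>p<m. (if i = p then c1 else 0) * rho y $$ (p, j))"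
        using i by (intro sum.cong refl) (simp add: ent)
      also have "\<dots> = c1 * rho y $$ (i, j)" using i by (simp add: if_distrib[of "\<lambda>a. a * _"] sum.delta cong: if_cong)
      finally show ?thesis unfolding phi_def using True by simp
    qed (simp add: AT_def phi_def)
  qed
  then show ?thesis by blast
qed

lemma f_conj_inv: "h \<in> carrier G \<Longrightarrow> y \<in> carrier G \<Longrightarrow> f (inv (h \<otimes> y \<otimes> inv h)) = f (inv y)"
proof -
  assume h: "h \<in> carrier G" and y: "y \<in> carrier G"
  have "inv (h \<otimes> y \<otimes> inv h) = h \<otimes> inv y \<otimes> inv h" using h y by (simp add: inv_mult_group m_assoc)
  then show ?thesis using f_conj[OF h inv_closed[OF y]] by simp
qed

lemma ADT_phi: "\<exists>c2. \<forall>i j. i < m \<longrightarrow> j < m \<longrightarrow> ADT (phi i j) = (\<lambda>x. c2 * phi i j x)"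
proof -
  obtain c2 where c2: "mat m m (\<lambda>(i, k). \<Sum>x\<in>carrier G. complex_of_int (f (inv x)) * rho x $$ (i, k)) = c2 \<cdot>\<^sub>m 1\<^sub>m m"
    using class_scalar[of "\<lambda>x. complex_of_int (f (inv x))"] f_conj_inv by auto
  have ent: "(\<Sum>x\<in>carrier G. complex_of_int (f (inv x)) * rho x $$ (p, j)) = (if p = j then c2 else 0)"
    if "p < m" "j < m" for p j
    using arg_cong[OF c2, of "\<lambda>M. M $$ (p, j)"] that by simp
  have "ADT (phi i j) = (\<lambda>x. c2 * phi i j x)" if i: "i < m" and j: "j < m" for i j
  proof (rule ext)
    fix z
    show "ADT (phi i j) z = c2 * phi i j z"
    proof (cases "z \<in> carrier G")
      case True
      have "ADT (phi i j) z = (\<Sum>y\<in>carrier G. complex_of_int (f (z \<otimes> inv y)) * rho y $$ (i, j))"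
        unfolding ADT_def phi_def using True by (simp cong: sum.cong)
      also have "\<dots> = (\<Sum>x\<in>carrier G. complex_of_int (f (z \<otimes> inv (z \<otimes> x))) * rho (z \<otimes> x) $$ (i, j))"
        by (rule sum_mult_left[OF True, of "\<lambda>y. complex_of_int (f (z \<otimes> inv y)) * rho y $$ (i, j)", symmetric])
      also have "\<dots> = (\<Sum>x\<in>carrier G. complex_of_int (f (inv x)) * (\<Sum>p<m. rho z $$ (i, p) * rho x $$ (p, j)))"
      proof (intro sum.cong refl)
        fix x assume x: "x \<in> carrier G"
        have "z \<otimes> inv (z \<otimes> x) = z \<otimes> inv x \<otimes> inv z" using x True by (simp add: inv_mult_group m_assoc)
        then have "f (z \<otimes> inv (z \<otimes> x)) = f (inv x)" using f_conj[OF True inv_closed[OF x]] by simp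
        then show "complex_of_int (f (z \<otimes> inv (z \<otimes> x))) * rho (z \<otimes> x) $$ (i, j) =
          complex_of_int (f (inv x)) * (\<Sum>p<m. rho z $$ (i, p) * rho x $$ (p, j))"
          using rho_mult_entry[OF True x i j] by simp
      qed
      also have "\<dots> = (\<Sum>p<m. rho z $$ (i, p) * (\<Sum>x\<in>carrier G. complex_of_int (f (inv x)) * rho x $$ (p, j)))"
        by (simp add: sum_distrib_left sum_distrib_right sum.swap[of _ "{..<m}"] ac_simps)
      also have "\<dots> = (\<Sum>p<m. rho z $$ (i, p) * (if p = j then c2 else 0))"
        using j by (intro sum.cong refl) (simp add: ent)
      also have "\<dots> = (\<Sum>p<m. (if p = j then c2 * rho z $$ (i, p) else 0))"
        by (intro sum.cong refl) auto
      also have "\<dots> = c2 * rho z $$ (i, j)" using j by (simp add: sum.delta')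
      finally show ?thesis unfolding phi_def using True by simp
    qed (simp add: ADT_def phi_def)
  qed
  then show ?thesis by blast
qed

lemma b_phi: assumes j: "j < m" shows "b j = lcomb m (\<lambda>i. b i \<one>) (\<lambda>i. phi i j)"
proof (rule ext)
  fix x
  show "b j x = lcomb m (\<lambda>i. b i \<one>) (\<lambda>i. phi i j) x"
  proof (cases "x \<in> carrier G")
    case True
    have "b j x = RT x (b j) \<one>" unfolding RT_def using True by simp
    also have "\<dots> = lcomb m (\<lambda>i. rho x $$ (i, j)) b \<one>" using RT_b_expand[OF True j] by simp
    also have "\<dots> = lcomb m (\<lambda>i. b i \<one>) (\<lambda>i. phi i j) x"
      unfolding lcomb_def phi_def using True by (simp add: mult.commute)
    finally show ?thesis .
  next
    case False
    then show ?thesis using svb[OF j] unfolding sv_def lcomb_def phi_def by simp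
  qed
qed

lemma HT_phi: "i < m \<Longrightarrow> j < m \<Longrightarrow> HT (phi i j) = (\<lambda>x. complex_of_real l * phi i j x)"
proof -
  obtain c1 where c1: "\<forall>i j. i < m \<longrightarrow> j < m \<longrightarrow> AT (phi i j) = (\<lambda>x. c1 * phi i j x)" using AT_phi by blast
  obtain c2 where c2: "\<forall>i j. i < m \<longrightarrow> j < m \<longrightarrow> ADT (phi i j) = (\<lambda>x. c2 * phi i j x)" using ADT_phi by blast
  have H: "HT (phi i j) = (\<lambda>x. (c1 * c2) * phi i j x)" if "i < m" "j < m" for i j
    unfolding HT_def using c1 c2 that by (simp add: ADT_scale mult.assoc)
  have m0: "0 < m" by (rule mpos)
  have "HT (b 0) = lcomb m (\<lambda>i. b i \<one>) (\<lambda>i. HT (phi i 0))" by (subst b_phi[OF m0]) (rule HT_lcomb)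
  also have "\<dots> = lcomb m (\<lambda>i. b i \<one>) (\<lambda>i x. (c1 * c2) * phi i 0 x)" using H m0 by (intro lcomb_cong) auto
  also have "\<dots> = (\<lambda>x. (c1 * c2) * b 0 x)" by (subst b_phi[OF m0]) (simp add: lcomb_def sum_distrib_left ac_simps)
  finally have "HT (b 0) = (\<lambda>x. (c1 * c2) * b 0 x)" .
  moreover have "HT (b 0) = (\<lambda>x. complex_of_real l * b 0 x)" by (rule Hb[OF m0])
  moreover obtain x where "b 0 x \<noteq> 0" using vbb[OF m0 m0] unfolding vip_def by force
  ultimately have "c1 * c2 = complex_of_real l" by (metis mult_right_cancel)
  then show "i < m \<Longrightarrow> j < m \<Longrightarrow> HT (phi i j) = (\<lambda>x. complex_of_real l * phi i j x)" using H by simp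
qed


end

context cf begin

definition arow :: "'a \<Rightarrow> 'a \<Rightarrow> complex" where
  "arow y = (\<lambda>z. if z \<in> carrier G then complex_of_int (f (z \<otimes> inv y)) else 0)"

lemma AT_as_vip: assumes y: "y \<in> carrier G" shows "AT u y = vip (arow y) u"
proof -
  have "vip (arow y) u = (\<Sum>z\<in>carrier G. complex_of_int (f (z \<otimes> inv y)) * u z)"
    unfolding vip_def arow_def by (intro sum.cong refl) simp
  also have "\<dots> = (\<Sum>x\<in>carrier G. complex_of_int (f (x \<otimes> y \<otimes> inv y)) * u (x \<otimes> y))"
    by (rule sum_mult_right[OF y, symmetric])
  also have "\<dots> = AT u y" unfolding AT_def using y by (simp add: m_assoc)
  finally show ?thesis by simp
qed

lemma arow_norm: assumes y: "y \<in> carrier G" shows "Re (vip (arow y) (arow y)) = real (card (carrier G))"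
proof -
  have "Re (vip (arow y) (arow y)) = (\<Sum>z\<in>carrier G. (cmod (arow y z))^2)" by (simp add: vip_self)
  also have "\<dots> = (\<Sum>z\<in>carrier G. 1)"
  proof (intro sum.cong refl)
    fix z assume z: "z \<in> carrier G"
    then have "f (z \<otimes> inv y) = 1 \<or> f (z \<otimes> inv y) = -1" using pm y by auto
    then show "(cmod (arow y z))^2 = 1" unfolding arow_def using z by auto
  qed
  finally show ?thesis by simp
qed

lemma trace_bound:
  assumes o: "orth K w" and ev: "\<forall>t<K. HT (w t) = (\<lambda>x. complex_of_real l' * w t x)"
  shows "real K * l' \<le> (real (card (carrier G)))^2"
proof -
  have "real K * l' = (\<Sum>t<K. Re (vip (w t) (HT (w t))))"
  proof -
    have "Re (vip (w t) (HT (w t))) = l'" if "t < K" for t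
      using ev that o unfolding orth_def by (simp add: vip_scale_right)
    then show ?thesis by simp
  qed
  also have "\<dots> = (\<Sum>t<K. \<Sum>y\<in>carrier G. (cmod (vip (w t) (arow y)))^2)"
  proof (intro sum.cong refl)
    fix t
    have "Re (vip (w t) (HT (w t))) = Re (vip (AT (w t)) (AT (w t)))" by (simp add: vip_HT_right)
    also have "\<dots> = (\<Sum>y\<in>carrier G. (cmod (AT (w t) y))^2)" by (simp add: vip_self)
    also have "\<dots> = (\<Sum>y\<in>carrier G. (cmod (vip (w t) (arow y)))^2)"
      by (intro sum.cong refl) (metis AT_as_vip complex_mod_cnj vip_cnj)
    finally show "Re (vip (w t) (HT (w t))) = (\<Sum>y\<in>carrier G. (cmod (vip (w t) (arow y)))^2)" .
  qed
  also have "\<dots> = (\<Sum>y\<in>carrier G. \<Sum>t<K. (cmod (vip (w t) (arow y)))^2)" by (rule sum.swap)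
  also have "\<dots> \<le> (\<Sum>y\<in>carrier G. Re (vip (arow y) (arow y)))"
    by (intro sum_mono bessel[OF o])
  also have "\<dots> = (\<Sum>y\<in>carrier G. real (card (carrier G)))" by (intro sum.cong refl) (simp add: arow_norm)
  finally show ?thesis by (simp add: power2_eq_square)
qed

end

context irr_ctx begin

lemma eig_bound: "l * (real m)^2 \<le> (real (card (carrier G)))^2"
proof -
  define n where "n = card (carrier G)"
  have npos: "n > 0" unfolding n_def using fin one_closed by (auto simp: card_gt_0_iff)
  have m0: "m > 0" by (rule mpos)
  define s where "s = complex_of_real (sqrt (real m / real n))"
  define w where "w t = (\<lambda>x. s * phi (t div m) (t mod m) x)" for t
  have ss: "cnj s * s = of_nat m / of_nat n" unfolding s_def using npos
    by (simp add: of_real_mult[symmetric] del: of_real_mult)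
  have vphi: "vip (phi a c) (phi a' c') = (if a' = a \<and> c = c' then of_nat n / of_nat m else 0)"
    if "a < m" "c < m" "a' < m" "c' < m" for a c a' c'
  proof -
    have "vip (phi a c) (phi a' c') = (\<Sum>g\<in>carrier G. rho g $$ (a', c') * rho (inv g) $$ (c, a))"
      unfolding vip_def phi_def using that by (intro sum.cong refl) (simp add: rho_inv_entry mult.commute)
    also have "\<dots> = (if a' = a \<and> c = c' then of_nat n / of_nat m else 0)"
      using schur_orth[of a' c' a c] that unfolding n_def by simp
    finally show ?thesis .
  qed
  have ow: "orth (m * m) w"
    unfolding orth_def
  proof (intro conjI allI impI)
    fix t show "sv (w t)" unfolding w_def sv_def phi_def by simp
  next
    fix t t' assume t: "t < m * m" and t': "t' < m * m"
    have d: "t div m < m" "t mod m < m" "t' div m < m" "t' mod m < m" using t t' m0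
      by (auto simp: less_mult_imp_div_less)
    have eq: "(t' div m = t div m \<and> t mod m = t' mod m) = (t = t')"
      by (metis div_mult_mod_eq)
    have "vip (w t) (w t') = cnj s * s * vip (phi (t div m) (t mod m)) (phi (t' div m) (t' mod m))"
      unfolding w_def by (simp add: vip_scale_left vip_scale_right mult.assoc)
    also have "\<dots> = (if t = t' then 1 else 0)"
      unfolding ss vphi[OF d] eq using npos m0 by auto
    finally show "vip (w t) (w t') = (if t = t' then 1 else 0)" .
  qed
  have ev: "\<forall>t<m * m. HT (w t) = (\<lambda>x. complex_of_real l * w t x)"
  proof (intro allI impI)
    fix t assume t: "t < m * m"
    have d: "t div m < m" "t mod m < m" using t m0 by (auto simp: less_mult_imp_div_less)
    show "HT (w t) = (\<lambda>x. complex_of_real l * w t x)"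
      unfolding w_def HT_scale HT_phi[OF d] by (simp add: ac_simps)
  qed
  have "real (m * m) * l \<le> (real n)^2" using trace_bound[OF ow ev] unfolding n_def .
  then show ?thesis unfolding n_def by (simp add: power2_eq_square ac_simps)
qed


end

context cf begin

lemma vip_cs:
  assumes u: "sv u"
  shows "(cmod (vip u a))^2 \<le> Re (vip u u) * Re (vip a a)"
proof (cases "u = (\<lambda>x. 0)")
  case True
  then show ?thesis by (simp add: vip_zero_left)
next
  case False
  define r where "r = Re (vip u u)"
  have rpos: "r > 0" unfolding r_def by (rule normalize_unit(2)[OF u False])
  define c where "c = complex_of_real (1 / sqrt r)"
  define u' where "u' = (\<lambda>x. c * u x)"
  have "vip u' u' = 1" unfolding u'_def c_def r_def by (rule normalize_unit(1)[OF u False])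
  moreover have "sv u'" using u unfolding u'_def sv_def by simp
  ultimately have o: "orth 1 (\<lambda>_. u')" unfolding orth_def by simp
  have "(cmod (vip u' a))^2 \<le> Re (vip a a)" using bessel[OF o, of a] by simp
  moreover have "vip u' a = c * vip u a"
  proof -
    have "vip u' a = cnj c * vip u a" unfolding u'_def by (rule vip_scale_left)
    moreover have "cnj c = c" unfolding c_def by simp
    ultimately show ?thesis by simp
  qed
  moreover have "cmod c = 1 / sqrt r" unfolding c_def using rpos by (simp only: norm_of_real) simp
  ultimately have "(1 / sqrt r * cmod (vip u a))^2 \<le> Re (vip a a)"
    by (metis norm_mult)
  then have "(1 / sqrt r)^2 * (cmod (vip u a))^2 \<le> Re (vip a a)"
    by (simp only: power_mult_distrib)
  then have "(1 / r) * (cmod (vip u a))^2 \<le> Re (vip a a)" using rpos by (simp add: power_divide)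
  then have "(cmod (vip u a))^2 \<le> r * Re (vip a a)" using rpos by (simp add: field_simps)
  then show ?thesis unfolding r_def .
qed

lemma std_basis: "\<exists>k e. orth k e \<and> (\<forall>u. sv u \<longrightarrow> insp k e u)"
proof -
  have "\<exists>gl. set gl = carrier G \<and> distinct gl" by (rule finite_distinct_list[OF fin])
  then obtain gl where glc: "set gl = carrier G \<and> distinct gl" ..
  have gl: "set gl = carrier G" "distinct gl" using glc by simp_all
  define k :: nat where "k = length gl"
  define e :: "nat \<Rightarrow> 'a \<Rightarrow> complex" where "e = (\<lambda>i x. if x = gl ! i then 1 else 0)"
  have glin: "gl ! i \<in> carrier G" if "i < k" for i
  proof -
    have "gl ! i \<in> set gl" using that unfolding k_def by (rule nth_mem)
    then show ?thesis using gl(1) by simp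
  qed
  have oe: "orth k e"
    unfolding orth_def
  proof (intro conjI allI impI)
    fix i assume "i < k" then show "sv (e i)" using glin unfolding sv_def e_def by auto
  next
    fix i j assume i: "i < k" and j: "j < k"
    have "vip (e i) (e j) = (\<Sum>x\<in>carrier G. if x = gl ! i then (if x = gl ! j then 1 else 0) else 0)"
      unfolding vip_def e_def by (intro sum.cong refl) auto
    also have "\<dots> = (if gl ! i = gl ! j then 1 else 0)" using glin[OF i] fin by (simp add: sum.delta')
    also have "\<dots> = (if i = j then 1 else 0)" using gl(2) i j unfolding k_def by (simp add: nth_eq_iff_index_eq)
    finally show "vip (e i) (e j) = (if i = j then 1 else 0)" .
  qed
  have "insp k e u" if u: "sv u" for u
  proof -
    have "u = lcomb k (\<lambda>i. u (gl ! i)) e"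
    proof (rule ext)
      fix x
      show "u x = lcomb k (\<lambda>i. u (gl ! i)) e x"
      proof (cases "x \<in> carrier G")
        case True
        then obtain i0 where i0: "i0 < k" "gl ! i0 = x" using gl(1) unfolding k_def by (metis in_set_conv_nth)
        have "lcomb k (\<lambda>i. u (gl ! i)) e x = (\<Sum>i<k. if i = i0 then u x else 0)"
          unfolding lcomb_def e_def
        proof (intro sum.cong refl)
          fix i assume "i \<in> {..<k}"
          then have "(x = gl ! i) = (i = i0)" using i0 gl(2) unfolding k_def by (auto simp: nth_eq_iff_index_eq)
          then show "u (gl ! i) * (if x = gl ! i then 1 else 0) = (if i = i0 then u x else 0)" using i0 by auto
        qed
        also have "\<dots> = u x" using i0 by simp
        finally show ?thesis by simp
      next
        case False
        then have "\<forall>i<k. x \<noteq> gl ! i" using glin by auto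
        then show ?thesis using False u unfolding lcomb_def e_def sv_def by simp
      qed
    qed
    then show ?thesis unfolding insp_def by blast
  qed
  then show ?thesis using oe by blast
qed

lemma main_bound:
  "(\<Sum>x\<in>carrier G. \<Sum>y\<in>carrier G. real_of_int (f x * f y * f (x \<otimes> y)))
     \<le> (real (card (carrier G)))^2 / real (min_nontriv_irrep_dim G)"
proof -
  define n where "n = card (carrier G)"
  have npos: "n > 0" unfolding n_def using fin one_closed by (auto simp: card_gt_0_iff)
  define T where "T = (\<Sum>x\<in>carrier G. \<Sum>y\<in>carrier G. real_of_int (f x * f y * f (x \<otimes> y)))"
  define fv where "fv = (\<lambda>x. if x \<in> carrier G then complex_of_int (f x) else 0)"
  have svf: "sv fv" unfolding fv_def sv_def by simp
  have f1: "f \<one> = 1 \<or> f \<one> = -1" using pm by auto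
  have fne: "fv \<noteq> (\<lambda>x. 0)"
  proof
    assume "fv = (\<lambda>x. 0)"
    then have "fv \<one> = 0" by simp
    then show False using f1 unfolding fv_def by auto
  qed
  have fvv: "Re (vip fv fv) = real n"
  proof -
    have "Re (vip fv fv) = (\<Sum>x\<in>carrier G. (cmod (fv x))^2)" by (simp add: vip_self)
    also have "\<dots> = (\<Sum>x\<in>carrier G. 1)"
    proof (intro sum.cong refl)
      fix x assume x: "x \<in> carrier G"
      then have "f x = 1 \<or> f x = -1" using pm by auto
      then show "(cmod (fv x))^2 = 1" unfolding fv_def using x by auto
    qed
    finally show ?thesis unfolding n_def by simp
  qed
  have Tvip: "vip fv (AT fv) = complex_of_real T"
  proof -
    have "vip fv (AT fv) = (\<Sum>y\<in>carrier G. complex_of_int (f y) * (\<Sum>x\<in>carrier G. complex_of_int (f x) * complex_of_int (f (x \<otimes> y))))"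
      unfolding vip_def AT_def fv_def by (intro sum.cong refl) (auto intro!: sum.cong)
    also have "\<dots> = (\<Sum>y\<in>carrier G. \<Sum>x\<in>carrier G. complex_of_int (f x * f y * f (x \<otimes> y)))"
      by (simp add: sum_distrib_left ac_simps)
    also have "\<dots> = (\<Sum>x\<in>carrier G. \<Sum>y\<in>carrier G. complex_of_int (f x * f y * f (x \<otimes> y)))"
      by (rule sum.swap)
    also have "\<dots> = complex_of_real T" unfolding T_def by simp
    finally show ?thesis .
  qed
  have T2: "T^2 \<le> real n * Re (vip fv (HT fv))"
  proof -
    have "(cmod (vip fv (AT fv)))^2 \<le> Re (vip fv fv) * Re (vip (AT fv) (AT fv))" by (rule vip_cs[OF svf])
    then show ?thesis unfolding Tvip fvv by (simp add: vip_HT_right)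
  qed
  obtain k e where ke: "orth k e" "\<forall>u. sv u \<longrightarrow> insp k e u" using std_basis by blast
  obtain l' e' where sp: "sv e'" "e' \<noteq> (\<lambda>x. 0)" "HT e' = (\<lambda>x. complex_of_real l' * e' x)"
    "Re (vip fv (HT fv)) \<le> l' * Re (vip fv fv)"
    using spectral[OF ke(1) _ _ svf fne] ke(2) svf by auto
  have T2': "T^2 \<le> (real n)^2 * l'" using T2 sp(4) fvv npos
    by (smt (verit) mult_left_mono of_nat_0_le_iff power2_eq_square mult.assoc mult.commute)
  define d where "d = min_nontriv_irrep_dim G"
  show ?thesis
  proof (cases "l' \<le> 0")
    case True
    then have "T^2 \<le> 0" using T2' by (smt (verit) mult_nonneg_nonpos zero_le_power2)
    then have "T = 0" by simp
    then show ?thesis unfolding T_def by simp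
  next
    case False
    then have lpos: "l' > 0" by simp
    obtain L where "adm l' (length L) ((!) L)" using orbit_basis[OF sp(1) sp(2) sp(3)] by blast
    then have ex: "\<exists>m b. adm l' m b" by blast
    define m0 where "m0 = (LEAST m. \<exists>b. adm l' m b)"
    obtain b0 where b0: "adm l' m0 b0" using LeastI_ex[OF ex] unfolding m0_def by blast
    have minimal: "\<And>m' b'. adm l' m' b' \<Longrightarrow> m0 \<le> m'" unfolding m0_def by (rule Least_le) blast
    interpret I: irr_ctx G f l' m0 b0
      by unfold_locales (use b0 minimal lpos in auto)
    have dle: "d \<le> m0" unfolding d_def min_nontriv_irrep_dim_def
      by (rule Least_le) (use I.rho_irrep I.rho_nontriv in blast)
    have "\<exists>\<rho> :: 'a \<Rightarrow> complex mat. is_irrep G d \<rho> \<and> \<not> is_trivial_rep G d \<rho>"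
      unfolding d_def min_nontriv_irrep_dim_def
      by (rule LeastI[of _ m0]) (use I.rho_irrep I.rho_nontriv in blast)
    then have dpos: "d > 0" unfolding is_irrep_def by blast
    have m0pos: "m0 > 0" by (rule I.mpos)
    have "l' * (real m0)^2 \<le> (real n)^2" using I.eig_bound unfolding n_def .
    then have lb: "l' \<le> (real n)^2 / (real m0)^2" using m0pos by (simp add: field_simps)
    have "T^2 \<le> (real n)^2 * ((real n)^2 / (real m0)^2)"
      using T2' lb by (smt (verit) mult_left_mono zero_le_power2)
    also have "\<dots> = ((real n)^2 / real m0)^2" by (simp add: power_divide power2_eq_square)
    finally have "T \<le> (real n)^2 / real m0" by (rule power2_le_imp_le) simp
    also have "\<dots> \<le> (real n)^2 / real d" using dle dpos by (intro divide_left_mono) auto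
    finally show ?thesis unfolding T_def n_def d_def .
  qed
qed

end

theorem theorem2:
  fixes G :: "('a, 'b) monoid_scheme" and f :: "'a \<Rightarrow> int"
  assumes "group G" and "finite (carrier G)"
    and "\<forall>x\<in>carrier G. f x = 1 \<or> f x = -1"
    and "\<forall>x\<in>carrier G. \<forall>y\<in>carrier G. f (inv\<^bsub>G\<^esub> x \<otimes>\<^bsub>G\<^esub> y \<otimes>\<^bsub>G\<^esub> x) = f y"
    and "(\<Sum>x\<in>carrier G. real_of_int (f x)) / real (card (carrier G)) = 0"
  shows "real (card {(x, y). x \<in> carrier G \<and> y \<in> carrier G \<and> f x * f y = f (x \<otimes>\<^bsub>G\<^esub> y)})
           / real (card (carrier G)) ^ 2
         \<le> (1 / 2) * (1 + 1 / real (min_nontriv_irrep_dim G))"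
proof -
  interpret group G by (rule assms(1))
  define n where "n = card (carrier G)"
  have npos: "n > 0" unfolding n_def using assms(2) one_closed by (auto simp: card_gt_0_iff)
  have "(\<Sum>x\<in>carrier G. real_of_int (f x)) = 0" using assms(5) npos unfolding n_def by simp
  then have "real_of_int (\<Sum>x\<in>carrier G. f x) = 0" by simp
  then have mean0: "(\<Sum>x\<in>carrier G. f x) = 0" by linarith
  interpret C: cf G f
    by unfold_locales (use assms(2,3,4) mean0 in auto)
  define d where "d = min_nontriv_irrep_dim G"
  define T where "T = (\<Sum>x\<in>carrier G. \<Sum>y\<in>carrier G. real_of_int (f x * f y * f (x \<otimes>\<^bsub>G\<^esub> y)))"
  have Tb: "T \<le> (real n)^2 / real d" using C.main_bound unfolding T_def n_def d_def .
  define S where "S = {(x, y). x \<in> carrier G \<and> y \<in> carrier G \<and> f x * f y = f (x \<otimes>\<^bsub>G\<^esub> y)}"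
  have S: "S = {p \<in> carrier G \<times> carrier G. f (fst p) * f (snd p) = f (fst p \<otimes>\<^bsub>G\<^esub> snd p)}"
    unfolding S_def by auto
  have "real (card S) = (\<Sum>p\<in>carrier G \<times> carrier G. if f (fst p) * f (snd p) = f (fst p \<otimes>\<^bsub>G\<^esub> snd p) then 1 else 0)"
  proof -
    have "real (card S) = (\<Sum>p\<in>S. (1::real))" by simp
    also have "\<dots> = (\<Sum>p\<in>carrier G \<times> carrier G. if f (fst p) * f (snd p) = f (fst p \<otimes>\<^bsub>G\<^esub> snd p) then 1 else 0)"
      unfolding S by (rule sum.inter_filter) (use assms(2) in simp)
    finally show ?thesis .
  qed
  also have "\<dots> = (\<Sum>x\<in>carrier G. \<Sum>y\<in>carrier G. if f x * f y = f (x \<otimes>\<^bsub>G\<^esub> y) then 1 else 0)"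
    by (simp add: sum.cartesian_product')
  also have "\<dots> = (\<Sum>x\<in>carrier G. \<Sum>y\<in>carrier G. (1 + real_of_int (f x * f y * f (x \<otimes>\<^bsub>G\<^esub> y))) / 2)"
  proof (intro sum.cong refl)
    fix x y assume x: "x \<in> carrier G" and y: "y \<in> carrier G"
    have fx: "f x = 1 \<or> f x = -1" and fy: "f y = 1 \<or> f y = -1" and fxy: "f (x \<otimes>\<^bsub>G\<^esub> y) = 1 \<or> f (x \<otimes>\<^bsub>G\<^esub> y) = -1"
      using assms(3) x y by auto
    show "(if f x * f y = f (x \<otimes>\<^bsub>G\<^esub> y) then 1 else 0) = (1 + real_of_int (f x * f y * f (x \<otimes>\<^bsub>G\<^esub> y))) / (2::real)"
      using fx fy fxy by auto
  qed
  also have "\<dots> = (\<Sum>x\<in>carrier G. \<Sum>y\<in>carrier G. (1::real)) / 2 +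
      (\<Sum>x\<in>carrier G. \<Sum>y\<in>carrier G. real_of_int (f x * f y * f (x \<otimes>\<^bsub>G\<^esub> y))) / 2"
    by (simp only: add_divide_distrib sum.distrib sum_divide_distrib)
  also have "\<dots> = ((real n)^2 + T) / 2"
    unfolding T_def n_def by (simp add: power2_eq_square add_divide_distrib)
  finally have cardS: "real (card S) = ((real n)^2 + T) / 2" .
  have n2: "(real n)^2 > 0" using npos by simp
  have "real (card S) / (real n)^2 = 1/2 + T / (2 * (real n)^2)"
    unfolding cardS using n2 by (simp add: field_simps)
  also have "\<dots> \<le> 1/2 + ((real n)^2 / real d) / (2 * (real n)^2)"
  proof -
    have "T / (2 * (real n)^2) \<le> ((real n)^2 / real d) / (2 * (real n)^2)"
      by (rule divide_right_mono[OF Tb]) (use n2 in simp)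
    then show ?thesis by linarith
  qed
  also have "\<dots> = (1 / 2) * (1 + 1 / real d)"
    using n2 by (simp add: field_simps)
  finally show ?thesis unfolding S_def n_def d_def .
qed

end
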